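(* Let $\Pi=(t_k)_{k\in\mathbb{Z}}$ be a sampling sequence with constants $0<\delta\le\Delta$, let $\chi$ be a kernel satisfying $(\chi1)$–$(\chi4)$ with associated function $L$ and $\varphi$-function $\psi$ (from $(\chi3)$), and suppose $L$ satisfies $(L1)$ and $(L2)$. Let $\varphi$ be a convex $\varphi$-function satisfying condition (H) with a convex $\varphi$-function $\eta$, and let $f\in L^{\varphi+\eta}(\mathbb{R})$. Fix $0<\alpha<1$ and suppose there are constants $M_1>0$, $\alpha_0>0$ (depending on $\alpha$ and $L$) such that $$ w\int_{|y|>1/w^{\alpha}} L(wy)\,dy\le M_1 w^{-\alpha_0}$$ for all sufficiently large $w>0$. Then there exist $\mu>0$, $\lambda_0>0$ and $\lambda>0$ such that, with $\omega(f,\delta')_\eta:=\sup_{|t|\le\delta'} I^{\eta}[\lambda(f(\cdot+t)-f(\cdot))]$, for every sufficiently large $w>0$, $$I^{\varphi}[\mu(S_wf-f)]\le \frac{\|L\|_1}{3\delta\, m_{0,\Pi}(L)}\,\omega(f,1/w^{\alpha})_\eta+\frac{M_1 I^{\eta}[\lambda_0 f]}{3\delta\, m_{0,\Pi}(L)}\,w^{-\alpha_0}+\frac{\Delta}{3\delta}\,\omega(f,\Delta/w)_\eta+\frac{I^{\varphi}[\lambda_0 f]}{3}\,w^{-\theta_0},$$ where $\theta_0>0$ is the constant of condition $(\chi4)$.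
   Context: A $\varphi$-function is a continuous non-decreasing $\varphi:[0,\infty)\to[0,\infty)$ with $\varphi(0)=0$, $\varphi(u)>0$ for $u>0$, and $\varphi(u)\to+\infty$ as $u\to+\infty$. For a $\varphi$-function $\varphi$ and measurable $f:\mathbb{R}\to\mathbb{R}$, $I^{\varphi}[f]:=\int_{\mathbb{R}}\varphi(|f(x)|)\,dx$, and the Orlicz space is $L^{\varphi}(\mathbb{R})=\{f \text{ measurable}: I^{\varphi}[\lambda f]<\infty \text{ for some }\lambda>0\}$; $L^{\varphi+\eta}(\mathbb{R})$ is the Orlicz space generated by the $\varphi$-function $\varphi+\eta$. A sampling sequence $\Pi=(t_k)_{k\in\mathbb{Z}}$ is a sequence of reals with $t_k<t_{k+1}$, $t_k\to\pm\infty$ as $k\to\pm\infty$, and constants $0<\delta\le\Delta$ with $\delta\le \Delta_k:=t_{k+1}-t_k\le\Delta$ for all $k$. A kernel is $\chi:\mathbb{R}\times\mathbb{R}\to\mathbb{R}$ with: $(\chi1)$ $k\mapsto\chi(wx-t_k,u)\in\ell^1(\mathbb{Z})$ for all $(x,u)\in\mathbb{R}^2$, $w>0$; $(\chi2)$ $\chi(x,0)=0$ for all $x$; $(\chi3)$ there exist a measurable $L:\mathbb{R}\to[0,\infty)$ and a $\varphi$-function $\psi$ with $|\chi(x,u)-\chi(x,v)|\le L(x)\psi(|u-v|)$ for all $x,u,v$; $(\chi4)$ there is $\theta_0>0$ such that $\mathcal{T}_w(x):=\sup_{u\ne0}\left|\frac1u\sum_{k}\chi(wx-t_k,u)-1\right|=\mathcal{O}(w^{-\theta_0})$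 as $w\to+\infty$, uniformly in $x\in\mathbb{R}$. Conditions on $L$: $(L1)$ $L\in L^1(\mathbb{R})$ and $L$ is bounded in a neighborhood of $0$; $(L2)$ there is $\beta_0>0$ with $\sup_{u\in\mathbb{R}}\sum_k L(u-t_k)|u-t_k|^{\beta_0}<+\infty$. Set $m_{0,\Pi}(L):=\sup_{u\in\mathbb{R}}\sum_k L(u-t_k)$ (finite under $(L1)$,$(L2)$). Condition (H): there is a $\varphi$-function $\eta$ such that for every $\lambda\in(0,1)$ there is $C_\lambda\in(0,1)$ with $\varphi(C_\lambda\psi(u))\le\eta(\lambda u)$ for all $u\ge0$, where $\psi$ is from $(\chi3)$. The nonlinear sampling Kantorovich operators are $(S_wf)(x):=\sum_{k\in\mathbb{Z}}\chi\!\left(wx-t_k,\frac{w}{\Delta_k}\int_{t_k/w}^{t_{k+1}/w}f(u)\,du\right)$, $x\in\mathbb{R}$, $w>0$, for locally integrable $f$ for which the series converges for every $x$. *)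

theory Defs
  imports "HOL-Analysis.Analysis"
begin

definition phi_function :: "(real \<Rightarrow> real) \<Rightarrow> bool" where
  "phi_function \<phi> \<longleftrightarrow> continuous_on {0..} \<phi> \<and> mono_on {0..} \<phi> \<and> \<phi> 0 = 0
     \<and> (\<forall>u>0. \<phi> u > 0) \<and> filterlim \<phi> at_top at_top"

definition modular :: "(real \<Rightarrow> real) \<Rightarrow> (real \<Rightarrow> real) \<Rightarrow> ennreal" where
  "modular \<phi> f = (\<integral>\<^sup>+ x. ennreal (\<phi> \<bar>f x\<bar>) \<partial>lebesgue)"

definition orlicz :: "(real \<Rightarrow> real) \<Rightarrow> (real \<Rightarrow> real) set" where
  "orlicz \<phi> = {f. f \<in> borel_measurable lebesgue \<and> (\<exists>lam>0. modular \<phi> (\<lambda>x. lam * f x) < \<infinity>)}"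

definition sampling_sequence :: "(int \<Rightarrow> real) \<Rightarrow> real \<Rightarrow> real \<Rightarrow> bool" where
  "sampling_sequence t \<delta> \<Delta> \<longleftrightarrow> 0 < \<delta> \<and> \<delta> \<le> \<Delta> \<and> (\<forall>k. t k < t (k + 1))
     \<and> filterlim t at_top at_top \<and> filterlim t at_bot at_bot
     \<and> (\<forall>k. \<delta> \<le> t (k + 1) - t k \<and> t (k + 1) - t k \<le> \<Delta>)"

definition kernel_chi1 :: "(int \<Rightarrow> real) \<Rightarrow> (real \<Rightarrow> real \<Rightarrow> real) \<Rightarrow> bool" where
  "kernel_chi1 t chi \<longleftrightarrow> (\<forall>x u w. w > 0 \<longrightarrow> (\<lambda>k. \<bar>chi (w * x - t k) u\<bar>) summable_on UNIV)"

definition kernel_chi2 :: "(real \<Rightarrow> real \<Rightarrow> real) \<Rightarrow> bool" where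
  "kernel_chi2 chi \<longleftrightarrow> (\<forall>x. chi x 0 = 0)"

definition kernel_chi3 :: "(real \<Rightarrow> real \<Rightarrow> real) \<Rightarrow> (real \<Rightarrow> real) \<Rightarrow> (real \<Rightarrow> real) \<Rightarrow> bool" where
  "kernel_chi3 chi L \<psi> \<longleftrightarrow> L \<in> borel_measurable lebesgue \<and> (\<forall>x. 0 \<le> L x) \<and> phi_function \<psi>
     \<and> (\<forall>x u v. \<bar>chi x u - chi x v\<bar> \<le> L x * \<psi> \<bar>u - v\<bar>)"

definition kernel_chi4 :: "(int \<Rightarrow> real) \<Rightarrow> (real \<Rightarrow> real \<Rightarrow> real) \<Rightarrow> real \<Rightarrow> bool" where
  "kernel_chi4 t chi \<theta>\<^sub>0 \<longleftrightarrow> \<theta>\<^sub>0 > 0 \<and> (\<exists>C W. \<forall>w\<ge>W. \<forall>x. \<forall>u. u \<noteq> 0 \<longrightarrow>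
      \<bar>(1 / u) * (\<Sum>\<^sub>\<infinity>k. chi (w * x - t k) u) - 1\<bar> \<le> C * w powr (- \<theta>\<^sub>0))"

definition cond_L1 :: "(real \<Rightarrow> real) \<Rightarrow> bool" where
  "cond_L1 L \<longleftrightarrow> integrable lebesgue L \<and> (\<exists>r>0. \<exists>B. \<forall>x. \<bar>x\<bar> < r \<longrightarrow> L x \<le> B)"

definition cond_L2 :: "(int \<Rightarrow> real) \<Rightarrow> (real \<Rightarrow> real) \<Rightarrow> bool" where
  "cond_L2 t L \<longleftrightarrow> (\<exists>\<beta>\<^sub>0>0. \<exists>B. \<forall>u.
      (\<lambda>k. L (u - t k) * \<bar>u - t k\<bar> powr \<beta>\<^sub>0) summable_on UNIV
      \<and> (\<Sum>\<^sub>\<infinity>k. L (u - t k) * \<bar>u - t k\<bar> powr \<beta>\<^sub>0) \<le> B)"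

definition m0 :: "(int \<Rightarrow> real) \<Rightarrow> (real \<Rightarrow> real) \<Rightarrow> real" where
  "m0 t L = (SUP u. (\<Sum>\<^sub>\<infinity>k. L (u - t k)))"

definition cond_H :: "(real \<Rightarrow> real) \<Rightarrow> (real \<Rightarrow> real) \<Rightarrow> (real \<Rightarrow> real) \<Rightarrow> bool" where
  "cond_H \<phi> \<eta> \<psi> \<longleftrightarrow> phi_function \<eta> \<and> (\<forall>lam. 0 < lam \<and> lam < 1 \<longrightarrow>
      (\<exists>C. 0 < C \<and> C < 1 \<and> (\<forall>u\<ge>0. \<phi> (C * \<psi> u) \<le> \<eta> (lam * u))))"

definition sampling_kantorovich ::
  "(int \<Rightarrow> real) \<Rightarrow> (real \<Rightarrow> real \<Rightarrow> real) \<Rightarrow> real \<Rightarrow> (real \<Rightarrow> real) \<Rightarrow> real \<Rightarrow> real" where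
  "sampling_kantorovich t chi w f x =
     (\<Sum>\<^sub>\<infinity>k. chi (w * x - t k)
        ((w / (t (k + 1) - t k)) * (LINT u:{t k / w .. t (k + 1) / w}|lebesgue. f u)))"

definition modulus :: "(real \<Rightarrow> real) \<Rightarrow> real \<Rightarrow> (real \<Rightarrow> real) \<Rightarrow> real \<Rightarrow> ennreal" where
  "modulus \<eta> lam f d = (SUP s\<in>{s. \<bar>s\<bar> \<le> d}. modular \<eta> (\<lambda>x. lam * (f (x + s) - f x)))"

end

theory Submission
  imports Defs "HOL-Probability.Probability_Measure"
begin

lemma phi_nonneg: "phi_function g \<Longrightarrow> 0 \<le> u \<Longrightarrow> 0 \<le> g u"
  unfolding phi_function_def
  by (metis atLeast_iff mono_onD order_refl)

lemma phi_mono: "phi_function g \<Longrightarrow> 0 \<le> u \<Longrightarrow> u \<le> v \<Longrightarrow> g u \<le> g v"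
  unfolding phi_function_def
  by (meson atLeast_iff mono_onD order_trans)

lemma phi_zero: "phi_function g \<Longrightarrow> g 0 = 0"
  unfolding phi_function_def by auto

lemma convex_scale:
  assumes "convex_on {0..} g" "g 0 = 0" "0 \<le> s" "s \<le> 1" "0 \<le> v"
  shows "g (s * v) \<le> s * g v"
proof -
  have "g ((1 - s) *\<^sub>R 0 + s *\<^sub>R v) \<le> (1 - s) * g 0 + s * g v"
    using convex_onD[OF assms(1), of s 0 v] assms by auto
  then show ?thesis using assms by simp
qed

lemma phi_cont_ext:
  assumes "phi_function g"
  shows "continuous_on UNIV (\<lambda>v. g (max v 0))"
proof -
  have "continuous_on {0..} g" using assms unfolding phi_function_def by auto
  moreover have "continuous_on UNIV (\<lambda>v::real. max v 0)" by (intro continuous_intros)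
  ultimately show ?thesis
    by (rule continuous_on_compose2) auto
qed

lemma phi_measurable[measurable]:
  assumes "phi_function g" "h \<in> borel_measurable M"
  shows "(\<lambda>x. g \<bar>h x\<bar>) \<in> borel_measurable M"
proof -
  have "(\<lambda>v. g (max v 0)) \<in> borel_measurable borel"
    using phi_cont_ext[OF assms(1)] by (rule borel_measurable_continuous_onI)
  then have "(\<lambda>x. g (max \<bar>h x\<bar> 0)) \<in> borel_measurable M"
    using assms(2) by measurable
  moreover have "(\<lambda>x. g (max \<bar>h x\<bar> 0)) = (\<lambda>x. g \<bar>h x\<bar>)" by auto
  ultimately show ?thesis by simp
qed

lemma convex_ext:
  assumes "phi_function g" "convex_on {0..} g"
  shows "convex_on UNIV (\<lambda>v. g (max v 0))"
proof (rule convex_onI)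
  fix t x y :: real assume t: "0 < t" "t < 1"
  have "max ((1 - t) * x + t * y) 0 \<le> (1 - t) * max x 0 + t * max y 0"
  proof -
    have "(1 - t) * x \<le> (1 - t) * max x 0" "t * y \<le> t * max y 0" using t by (auto intro: mult_left_mono)
    moreover have "0 \<le> (1 - t) * max x 0 + t * max y 0" using t by auto
    ultimately show ?thesis by linarith
  qed
  then have "g (max ((1 - t) * x + t * y) 0) \<le> g ((1 - t) * max x 0 + t * max y 0)"
    using t by (intro phi_mono[OF assms(1)]) auto
  also have "\<dots> \<le> (1 - t) * g (max x 0) + t * g (max y 0)"
    using convex_onD[OF assms(2), of t "max x 0" "max y 0"] t by auto
  finally show "g (max ((1 - t) *\<^sub>R x + t *\<^sub>R y) 0) \<le> (1 - t) * g (max x 0) + t * g (max y 0)"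
    by simp
qed (auto)

lemma convex3:
  assumes "phi_function g" "convex_on {0..} g" "0 \<le> a" "0 \<le> b" "0 \<le> c"
  shows "g ((a + b + c) / 3) \<le> (g a + g b + g c) / 3"
proof -
  have "g ((\<Sum>i\<in>{0::nat,1,2}. (1/3) *\<^sub>R ([a,b,c] ! i))) \<le> (\<Sum>i\<in>{0::nat,1,2}. (1/3) * g ([a,b,c] ! i))"
    by (rule convex_on_sum[OF _ _ assms(2)]) (use assms in \<open>auto simp: less_Suc_eq\<close>)
  then show ?thesis by (simp add: field_simps)
qed

lemma convex2:
  assumes "phi_function g" "convex_on {0..} g" "0 \<le> a" "0 \<le> b"
  shows "g ((a + b) / 2) \<le> (g a + g b) / 2"
  using convex_onD[OF assms(2), of "1/2" a b] assms by (simp add: field_simps)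

lemma finite_jensen:
  assumes phi: "phi_function g" "convex_on {0..} g"
    and F: "finite F" and a: "\<And>k. k \<in> F \<Longrightarrow> 0 \<le> a k" and am: "sum a F \<le> m" and m: "0 < m"
    and y: "\<And>k. k \<in> F \<Longrightarrow> 0 \<le> y k"
  shows "g (\<Sum>k\<in>F. a k * y k) \<le> (\<Sum>k\<in>F. a k / m * g (m * y k))"
proof (cases "sum a F = 0")
  case True
  then have "\<And>k. k \<in> F \<Longrightarrow> a k = 0" using sum_nonneg_eq_0_iff[OF F] a by blast
  then show ?thesis using phi_zero[OF phi(1)] by simp
next
  case False
  define s where "s = sum a F"
  have s: "0 < s" using False a s_def by (metis sum_nonneg order_le_less)
  have Fne: "F \<noteq> {}" using False by auto
  have J: "g (\<Sum>k\<in>F. (a k / s) *\<^sub>R (m * y k)) \<le> (\<Sum>k\<in>F. (a k / s) * g (m * y k))"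
    by (rule convex_on_sum[OF F Fne phi(2)])
       (use s a y m in \<open>auto simp: s_def sum_divide_distrib[symmetric]\<close>)
  have eq: "(\<Sum>k\<in>F. a k * y k) = (s / m) * (\<Sum>k\<in>F. (a k / s) *\<^sub>R (m * y k))"
    using s m by (simp add: sum_distrib_left field_simps)
  have "g (\<Sum>k\<in>F. a k * y k) \<le> (s / m) * g (\<Sum>k\<in>F. (a k / s) *\<^sub>R (m * y k))"
    unfolding eq
    by (rule convex_scale[OF phi(2) phi_zero[OF phi(1)]])
       (use s m am a y in \<open>auto simp: s_def intro!: sum_nonneg\<close>)
  also have "\<dots> \<le> (s / m) * (\<Sum>k\<in>F. (a k / s) * g (m * y k))"
    by (rule mult_left_mono) (use J s m in auto)
  also have "\<dots> = (\<Sum>k\<in>F. a k / m * g (m * y k))"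
    using s m by (simp add: sum_distrib_left field_simps)
  finally show ?thesis .
qed

lemma sum_bound:
  assumes g: "phi_function g" and b: "\<And>k. 0 \<le> b k"
    and R: "\<And>F. finite F \<Longrightarrow> g (sum b F) \<le> R"
  shows "b summable_on UNIV \<and> g (infsum b UNIV) \<le> R"
proof -
  have "filterlim g at_top at_top" using g unfolding phi_function_def by auto
  then have "eventually (\<lambda>u. g u \<ge> R + 1) at_top" by (simp add: filterlim_at_top)
  then obtain M where M: "\<And>u. u \<ge> M \<Longrightarrow> g u \<ge> R + 1" by (auto simp: eventually_at_top_linorder)
  have bd: "sum b F \<le> M" if "finite F" for F
  proof (rule ccontr)
    assume "\<not> sum b F \<le> M" then have "g (sum b F) \<ge> R + 1" using M by auto
    with R[OF that] show False by simp
  qed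
  have sb: "b summable_on UNIV"
    by (rule nonneg_bdd_above_summable_on) (use b bd in \<open>auto simp: bdd_above_def\<close>)
  have cont: "continuous_on {0..} g" using g unfolding phi_function_def by auto
  have lim: "((\<lambda>F. sum b F) \<longlongrightarrow> infsum b UNIV) (finite_subsets_at_top UNIV)"
    by (rule infsum_tendsto[OF sb])
  have nn: "0 \<le> infsum b UNIV" using b by (simp add: infsum_nonneg)
  have "((\<lambda>F. g (sum b F)) \<longlongrightarrow> g (infsum b UNIV)) (finite_subsets_at_top UNIV)"
    by (rule continuous_on_tendsto_compose[OF cont lim]) (use nn b in \<open>auto intro!: always_eventually sum_nonneg\<close>)
  then have "g (infsum b UNIV) \<le> R"
    by (rule tendsto_upperbound) (use R in \<open>auto intro!: eventually_finite_subsets_at_top_weakI\<close>)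
  with sb show ?thesis by blast
qed

definition nsum :: "(int \<Rightarrow> real) \<Rightarrow> ennreal" where
  "nsum g = (\<integral>\<^sup>+k. ennreal (g k) \<partial>count_space UNIV)"

lemma nsum_finite_le:
  assumes "\<And>k. 0 \<le> g k" "finite F"
  shows "ennreal (sum g F) \<le> nsum g"
proof -
  have "ennreal (sum g F) = (\<Sum>k\<in>F. ennreal (g k))" using assms by (simp add: sum_ennreal)
  also have "\<dots> = (\<integral>\<^sup>+k. ennreal (g k) \<partial>count_space F)" using assms by (simp add: nn_integral_count_space_finite)
  also have "\<dots> = (\<integral>\<^sup>+k. ennreal (g k) * indicator F k \<partial>count_space UNIV)"
    by (rule nn_integral_count_space_indicator) simp
  also have "\<dots> \<le> nsum g" unfolding nsum_def
    by (intro nn_integral_mono) (auto split: split_indicator)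
  finally show ?thesis .
qed

lemma nsum_of_summable:
  assumes "\<And>k. 0 \<le> g k" "g summable_on UNIV"
  shows "nsum g = ennreal (infsum g UNIV)"
proof -
  have a: "Infinite_Sum.abs_summable_on g UNIV" using assms(2) summable_on_iff_abs_summable_on_real by blast
  have b: "Infinite_Set_Sum.abs_summable_on g UNIV" using a abs_summable_equivalent by blast
  show ?thesis unfolding nsum_def
    using nn_integral_conv_infsetsum[OF b] infsetsum_infsum[OF b] assms(1) by simp
qed

lemma nsum_fin_summable:
  assumes "\<And>k. 0 \<le> g k" "nsum g < \<infinity>"
  shows "g summable_on UNIV"
proof -
  have "integrable (count_space UNIV) g"
    by (rule integrableI_bounded) (use assms in \<open>auto simp: nsum_def\<close>)
  then have "Infinite_Set_Sum.abs_summable_on g UNIV" by (simp add: abs_summable_on_def)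
  then have "Infinite_Sum.abs_summable_on g UNIV" using abs_summable_equivalent by blast
  then show ?thesis using abs_summable_summable by blast
qed

lemma nsum_mono: "(\<And>k. g k \<le> h k) \<Longrightarrow> nsum g \<le> nsum h"
  unfolding nsum_def by (intro nn_integral_mono) (simp add: ennreal_leI)

lemma samp_props:
  assumes "sampling_sequence t \<delta> \<Delta>"
  shows "0 < \<delta>" "\<delta> \<le> \<Delta>" "\<And>k. \<delta> \<le> t (k + 1) - t k" "\<And>k. t (k + 1) - t k \<le> \<Delta>"
  using assms unfolding sampling_sequence_def by auto

lemma samp_gap:
  fixes k :: int and n :: nat
  assumes "sampling_sequence t \<delta> \<Delta>"
  shows "t (k + int n) - t k \<ge> real n * \<delta>"
proof (induction n)
  case 0 then show ?case by simp
next
  case (Suc n)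
  have "\<delta> \<le> t ((k + int n) + 1) - t (k + int n)" using samp_props(3)[OF assms] by blast
  then show ?case using Suc by (simp add: algebra_simps)
qed

lemma samp_gap':
  assumes "sampling_sequence t \<delta> \<Delta>" "k \<le> j"
  shows "t j - t k \<ge> real_of_int (j - k) * \<delta>"
proof -
  obtain n :: nat where n: "j = k + int n" using assms(2) zle_iff_zadd by blast
  show ?thesis using samp_gap[OF assms(1), where k=k and n=n] n by simp
qed

lemma samp_mono:
  assumes "sampling_sequence t \<delta> \<Delta>" "k < j"
  shows "t (k + 1) \<le> t j"
proof -
  have "t j - t (k + 1) \<ge> real_of_int (j - (k + 1)) * \<delta>" using samp_gap'[OF assms(1), of "k + 1" j] assms(2) by simp
  moreover have "real_of_int (j - (k + 1)) * \<delta> \<ge> 0" using assms samp_props(1)[OF assms(1)] by simp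
  ultimately show ?thesis by linarith
qed

lemma samp_unique:
  assumes "sampling_sequence t \<delta> \<Delta>" "\<bar>u - t k\<bar> < r" "\<bar>u - t j\<bar> < r" "2 * r \<le> \<delta>"
  shows "k = j"
proof (rule ccontr)
  assume "k \<noteq> j"
  then consider "k < j" | "j < k" by linarith
  then show False
  proof cases
    case 1
    have "t (k + 1) - t k \<ge> \<delta>" using samp_props(3)[OF assms(1)] by blast
    moreover have "t (k+1) \<le> t j" using samp_mono[OF assms(1) 1] .
    ultimately show False using assms by linarith
  next
    case 2
    have "t (j + 1) - t j \<ge> \<delta>" using samp_props(3)[OF assms(1)] by blast
    moreover have "t (j+1) \<le> t k" using samp_mono[OF assms(1) 2] .
    ultimately show False using assms by linarith
  qed
qed

lemma L_sum_bound:
  assumes samp: "sampling_sequence t \<delta> \<Delta>" and chi3: "kernel_chi3 chi L \<psi>"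
    and L1: "cond_L1 L" and L2: "cond_L2 t L"
  shows "\<exists>B. \<forall>u. (\<lambda>k. L (u - t k)) summable_on UNIV \<and> infsum (\<lambda>k. L (u - t k)) UNIV \<le> B"
proof -
  have Lnn: "\<And>x. 0 \<le> L x" using chi3 unfolding kernel_chi3_def by auto
  obtain r B1 where r: "r > 0" and B1: "\<And>x. \<bar>x\<bar> < r \<Longrightarrow> L x \<le> B1" using L1 unfolding cond_L1_def by auto
  obtain \<beta> B2 where \<beta>: "\<beta> > 0" and B2: "\<And>u. (\<lambda>k. L (u - t k) * \<bar>u - t k\<bar> powr \<beta>) summable_on UNIV
      \<and> (\<Sum>\<^sub>\<infinity>k. L (u - t k) * \<bar>u - t k\<bar> powr \<beta>) \<le> B2" using L2 unfolding cond_L2_def by auto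
  define r' where "r' = min r (\<delta> / 2)"
  have \<delta>: "0 < \<delta>" using samp_props[OF samp] by auto
  have r': "0 < r'" "r' \<le> r" "2 * r' \<le> \<delta>" using r \<delta> by (auto simp: r'_def)
  define B where "B = max B1 0 + B2 / r' powr \<beta>"
  have fin: "sum (\<lambda>k. L (u - t k)) F \<le> B" if F: "finite F" for u F
  proof -
    define S where "S = {k. \<bar>u - t k\<bar> < r'}"
    have split: "sum (\<lambda>k. L (u - t k)) F = sum (\<lambda>k. L (u - t k)) (F \<inter> S) + sum (\<lambda>k. L (u - t k)) (F - S)"
      using F by (metis sum.Int_Diff)
    have one: "sum (\<lambda>k. L (u - t k)) (F \<inter> S) \<le> max B1 0"
    proof (cases "F \<inter> S = {}")
      case True then show ?thesis by simp
    next
      case False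
      then obtain j where j: "j \<in> F \<inter> S" by auto
      have "F \<inter> S = {j}"
      proof
        show "F \<inter> S \<subseteq> {j}"
        proof
          fix k assume k: "k \<in> F \<inter> S"
          have "k = j" by (rule samp_unique[OF samp _ _ r'(3), of u]) (use k j in \<open>auto simp: S_def\<close>)
          then show "k \<in> {j}" by simp
        qed
      qed (use j in auto)
      moreover have "\<bar>u - t j\<bar> < r" using j r' by (auto simp: S_def)
      ultimately show ?thesis using B1[of "u - t j"] by simp
    qed
    have two: "sum (\<lambda>k. L (u - t k)) (F - S) \<le> B2 / r' powr \<beta>"
    proof -
      have "sum (\<lambda>k. L (u - t k)) (F - S) \<le> sum (\<lambda>k. L (u - t k) * \<bar>u - t k\<bar> powr \<beta> / r' powr \<beta>) (F - S)"
      proof (rule sum_mono)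
        fix k assume "k \<in> F - S"
        then have "r' \<le> \<bar>u - t k\<bar>" by (auto simp: S_def)
        then have "r' powr \<beta> \<le> \<bar>u - t k\<bar> powr \<beta>" using r' \<beta> by (intro powr_mono2) auto
        then have "1 \<le> \<bar>u - t k\<bar> powr \<beta> / r' powr \<beta>" using r' by simp
        then show "L (u - t k) \<le> L (u - t k) * \<bar>u - t k\<bar> powr \<beta> / r' powr \<beta>"
        proof -
          have "L (u - t k) * 1 \<le> L (u - t k) * (\<bar>u - t k\<bar> powr \<beta> / r' powr \<beta>)"
            by (rule mult_left_mono) (use \<open>1 \<le> _\<close> Lnn in auto)
          then show ?thesis by simp
        qed
      qed
      also have "\<dots> = sum (\<lambda>k. L (u - t k) * \<bar>u - t k\<bar> powr \<beta>) (F - S) / r' powr \<beta>"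
        by (simp add: sum_divide_distrib)
      also have "\<dots> \<le> B2 / r' powr \<beta>"
      proof (rule divide_right_mono)
        have "sum (\<lambda>k. L (u - t k) * \<bar>u - t k\<bar> powr \<beta>) (F - S) \<le> (\<Sum>\<^sub>\<infinity>k. L (u - t k) * \<bar>u - t k\<bar> powr \<beta>)"
          by (rule finite_sum_le_infsum) (use B2 F Lnn in auto)
        then show "sum (\<lambda>k. L (u - t k) * \<bar>u - t k\<bar> powr \<beta>) (F - S) \<le> B2" using B2 by (meson order.trans)
      qed (use r' in auto)
      finally show ?thesis .
    qed
    show ?thesis using split one two by (simp add: B_def)
  qed
  have "(\<lambda>k. L (u - t k)) summable_on UNIV" for u
    by (rule nonneg_bdd_above_summable_on) (use Lnn fin in \<open>auto simp: bdd_above_def\<close>)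
  moreover have "infsum (\<lambda>k. L (u - t k)) UNIV \<le> B" for u
    by (rule infsum_le_finite_sums) (use fin \<open>\<And>u. (\<lambda>k. L (u - t k)) summable_on UNIV\<close> in auto)
  ultimately show ?thesis by blast
qed

lemma m0_props:
  assumes samp: "sampling_sequence t \<delta> \<Delta>" and chi3: "kernel_chi3 chi L \<psi>"
    and L1: "cond_L1 L" and L2: "cond_L2 t L"
  shows "\<And>u. (\<lambda>k. L (u - t k)) summable_on UNIV" "\<And>u. infsum (\<lambda>k. L (u - t k)) UNIV \<le> m0 t L"
proof -
  obtain B where B: "\<And>u. (\<lambda>k. L (u - t k)) summable_on UNIV \<and> infsum (\<lambda>k. L (u - t k)) UNIV \<le> B"
    using L_sum_bound[OF assms] by blast
  show "\<And>u. (\<lambda>k. L (u - t k)) summable_on UNIV" using B by blast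
  show "infsum (\<lambda>k. L (u - t k)) UNIV \<le> m0 t L" for u
    unfolding m0_def by (rule cSUP_upper) (use B in \<open>auto intro!: bdd_aboveI2[where M=B]\<close>)
qed

lemma m0_pos:
  assumes samp: "sampling_sequence t \<delta> \<Delta>" and chi3: "kernel_chi3 chi L \<psi>"
    and L1: "cond_L1 L" and L2: "cond_L2 t L" and chi4: "kernel_chi4 t chi \<theta>\<^sub>0"
    and chi2: "kernel_chi2 chi"
  shows "0 < m0 t L"
proof (rule ccontr)
  assume "\<not> 0 < m0 t L"
  have Lnn: "\<And>x. 0 \<le> L x" using chi3 unfolding kernel_chi3_def by auto
  have L0: "L y = 0" for y
  proof -
    have "L ((y + t 0) - t 0) \<le> infsum (\<lambda>k. L ((y + t 0) - t k)) UNIV"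
    proof -
      have "sum (\<lambda>k. L ((y + t 0) - t k)) {0} \<le> infsum (\<lambda>k. L ((y + t 0) - t k)) UNIV"
        by (rule finite_sum_le_infsum[OF m0_props(1)[OF assms(1-4)]]) (use Lnn in auto)
      then show ?thesis by simp
    qed
    also have "\<dots> \<le> m0 t L" by (rule m0_props(2)[OF assms(1-4)])
    finally show ?thesis using Lnn[of y] \<open>\<not> 0 < m0 t L\<close> by simp
  qed
  have chi0: "chi x u = 0" for x u
  proof -
    have "\<bar>chi x u - chi x 0\<bar> \<le> L x * \<psi> \<bar>u - 0\<bar>" using chi3 unfolding kernel_chi3_def by blast
    moreover have "chi x 0 = 0" using chi2 unfolding kernel_chi2_def by blast
    ultimately show ?thesis using L0[of x] by simp
  qed
  obtain C W where th: "\<theta>\<^sub>0 > 0" and CW: "\<And>w x u. w \<ge> W \<Longrightarrow> u \<noteq> 0 \<Longrightarrow>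
      \<bar>(1 / u) * (\<Sum>\<^sub>\<infinity>k. chi (w * x - t k) u) - 1\<bar> \<le> C * w powr (- \<theta>\<^sub>0)"
    using chi4 unfolding kernel_chi4_def by blast
  have "((\<lambda>w. C * w powr (- \<theta>\<^sub>0)) \<longlongrightarrow> C * 0) at_top"
    by (intro tendsto_mult tendsto_const tendsto_neg_powr[OF _ filterlim_ident]) (use th in auto)
  then have "eventually (\<lambda>w. C * w powr (- \<theta>\<^sub>0) < 1) at_top"
    by (intro order_tendstoD) auto
  moreover have "eventually (\<lambda>w. w \<ge> W) at_top" by simp
  ultimately have "eventually (\<lambda>w. C * w powr (- \<theta>\<^sub>0) < 1 \<and> w \<ge> W) at_top"
    by (rule eventually_conj)
  then have "\<exists>N. \<forall>w\<ge>N. C * w powr (- \<theta>\<^sub>0) < 1 \<and> w \<ge> W"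
    by (simp only: eventually_at_top_linorder)
  then obtain N where N: "\<forall>w\<ge>N. C * w powr (- \<theta>\<^sub>0) < 1 \<and> w \<ge> W" by (elim exE)
  then have w: "C * N powr (- \<theta>\<^sub>0) < 1 \<and> N \<ge> W" by simp
  then have w1: "C * N powr (- \<theta>\<^sub>0) < 1" and w2: "N \<ge> W" by auto
  have "\<bar>(1 / 1) * (\<Sum>\<^sub>\<infinity>k. chi (N * 0 - t k) 1) - 1\<bar> \<le> C * N powr (- \<theta>\<^sub>0)" by (rule CW[OF w2]) simp
  then show False using w1 chi0 by simp
qed

lemma phi_linear_below:
  assumes phi: "phi_function g" "convex_on {0..} g" and v: "0 \<le> v"
  shows "v \<le> 1 + g v / g 1"
proof (cases "v \<le> 1")
  case True
  have "0 \<le> g v / g 1" using phi_nonneg[OF phi(1)] v by simp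
  then show ?thesis using True by simp
next
  case False
  have g1: "0 < g 1" using phi(1) unfolding phi_function_def by auto
  have "g ((1 / v) * v) \<le> (1 / v) * g v"
    by (rule convex_scale[OF phi(2) phi_zero[OF phi(1)]]) (use False in auto)
  then have "g 1 \<le> g v / v" using False by simp
  then have "g 1 * v \<le> g v" using False by (simp add: field_simps)
  then have "v \<le> g v / g 1" using g1 by (simp add: field_simps)
  then show ?thesis by simp
qed

lemma loc_int:
  assumes phi: "phi_function \<phi>" "convex_on {0..} \<phi>" and eta: "phi_function \<eta>"
    and fb[measurable]: "f \<in> borel_measurable borel" and fo: "f \<in> orlicz (\<lambda>u. \<phi> u + \<eta> u)"
  shows "integrable lborel (\<lambda>u. indicator {a..b} u * f u)"
proof -
  obtain lam where lam: "lam > 0" and fin: "modular (\<lambda>u. \<phi> u + \<eta> u) (\<lambda>x. lam * f x) < \<infinity>"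
    using fo unfolding orlicz_def by auto
  have g1: "0 < \<phi> 1" using phi(1) unfolding phi_function_def by auto
  have fin2: "(\<integral>\<^sup>+x. ennreal (\<phi> \<bar>lam * f x\<bar>) \<partial>lborel) < \<infinity>"
  proof -
    have "(\<integral>\<^sup>+x. ennreal (\<phi> \<bar>lam * f x\<bar>) \<partial>lborel) \<le> (\<integral>\<^sup>+x. ennreal (\<phi> \<bar>lam * f x\<bar> + \<eta> \<bar>lam * f x\<bar>) \<partial>lborel)"
      by (intro nn_integral_mono ennreal_leI) (use phi_nonneg[OF eta] in auto)
    also have "\<dots> = modular (\<lambda>u. \<phi> u + \<eta> u) (\<lambda>x. lam * f x)"
      unfolding modular_def by (simp add: nn_integral_completion)
    finally show ?thesis using fin by (simp add: top.not_eq_extremum le_less_trans)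
  qed
  have pt: "\<bar>f x\<bar> \<le> (1 + \<phi> \<bar>lam * f x\<bar> / \<phi> 1) / lam" for x
  proof -
    have "\<bar>lam * f x\<bar> \<le> 1 + \<phi> \<bar>lam * f x\<bar> / \<phi> 1" by (rule phi_linear_below[OF phi]) simp
    then show ?thesis using lam by (simp add: abs_mult field_simps)
  qed
  show ?thesis
  proof (rule integrableI_bounded)
    show "(\<lambda>u. indicator {a..b} u * f u) \<in> borel_measurable lborel" by measurable
    have "(\<integral>\<^sup>+x. ennreal (norm (indicator {a..b} x * f x)) \<partial>lborel)
        \<le> (\<integral>\<^sup>+x. ennreal (1 / lam) * indicator {a..b} x + ennreal (1 / (lam * \<phi> 1)) * ennreal (\<phi> \<bar>lam * f x\<bar>) \<partial>lborel)"
    proof (intro nn_integral_mono)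
      fix x
      have "norm (indicator {a..b} x * f x) \<le> 1 / lam * indicator {a..b} x + 1 / (lam * \<phi> 1) * \<phi> \<bar>lam * f x\<bar>"
      proof (cases "x \<in> {a..b}")
        case True
        have e: "(1 + \<phi> \<bar>lam * f x\<bar> / \<phi> 1) / lam = 1 / lam + 1 / (lam * \<phi> 1) * \<phi> \<bar>lam * f x\<bar>"
          using lam g1 by (simp add: field_simps)
        show ?thesis using True pt[of x] unfolding e by (simp add: abs_mult)
      next
        case False
        then show ?thesis using lam g1 phi_nonneg[OF phi(1), of "\<bar>lam * f x\<bar>"] by simp
      qed
      then have "ennreal (norm (indicator {a..b} x * f x)) \<le> ennreal (1 / lam * indicator {a..b} x + 1 / (lam * \<phi> 1) * \<phi> \<bar>lam * f x\<bar>)"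
        by (rule ennreal_leI)
      also have "\<dots> = ennreal (1 / lam) * indicator {a..b} x + ennreal (1 / (lam * \<phi> 1)) * ennreal (\<phi> \<bar>lam * f x\<bar>)"
        using lam g1 phi_nonneg[OF phi(1), of "\<bar>lam * f x\<bar>"]
      proof -
        have "0 \<le> 1 / (lam * \<phi> 1) * \<phi> \<bar>lam * f x\<bar>" "0 \<le> 1 / lam * indicator {a..b} x"
          using lam g1 phi_nonneg[OF phi(1), of "\<bar>lam * f x\<bar>"] by auto
        then have "ennreal (1 / lam * indicator {a..b} x + 1 / (lam * \<phi> 1) * \<phi> \<bar>lam * f x\<bar>)
           = ennreal (1 / lam * indicator {a..b} x) + ennreal (1 / (lam * \<phi> 1) * \<phi> \<bar>lam * f x\<bar>)"
          by (simp add: ennreal_plus)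
        also have "\<dots> = ennreal (1 / lam) * indicator {a..b} x + ennreal (1 / (lam * \<phi> 1)) * ennreal (\<phi> \<bar>lam * f x\<bar>)"
        proof -
          have m: "ennreal (1 / (lam * \<phi> 1)) * ennreal (\<phi> \<bar>lam * f x\<bar>) = ennreal (1 / (lam * \<phi> 1) * \<phi> \<bar>lam * f x\<bar>)"
            using lam g1 phi_nonneg[OF phi(1), of "\<bar>lam * f x\<bar>"] by (intro ennreal_mult[symmetric]) auto
          have m2: "ennreal (1 / lam) * indicator {a..b} x = ennreal (1 / lam * indicator {a..b} x)"
            using lam by (auto split: split_indicator)
          show ?thesis unfolding m m2 ..
        qed
        finally show ?thesis .
      qed
      finally show "ennreal (norm (indicator {a..b} x * f x)) \<le> ennreal (1 / lam) * indicator {a..b} x + ennreal (1 / (lam * \<phi> 1)) * ennreal (\<phi> \<bar>lam * f x\<bar>)" .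
    qed
    also have "\<dots> = ennreal (1 / lam) * emeasure lborel {a..b} + ennreal (1 / (lam * \<phi> 1)) * (\<integral>\<^sup>+x. ennreal (\<phi> \<bar>lam * f x\<bar>) \<partial>lborel)"
      using phi(1) by (subst nn_integral_add) (auto simp: nn_integral_cmult nn_integral_cmult_indicator)
    also have "\<dots> < \<infinity>"
    proof -
      have "emeasure lborel {a..b} < \<infinity>" by (cases "a \<le> b") auto
      then show ?thesis using fin2 by (simp add: ennreal_mult_less_top)
    qed
    finally show "(\<integral>\<^sup>+x. ennreal (norm (indicator {a..b} x * f x)) \<partial>lborel) < \<infinity>" .
  qed
qed

lemma jensen_int:
  assumes eta: "phi_function \<eta>" "convex_on {0..} \<eta>" and ab: "a < b"
    and hb[measurable]: "h \<in> borel_measurable borel"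
    and hi: "integrable lborel (\<lambda>u. indicator {a..b} u * h u)"
  shows "ennreal (\<eta> \<bar>1 / (b - a) * integral\<^sup>L lborel (\<lambda>u. indicator {a..b} u * h u)\<bar>)
     \<le> ennreal (1 / (b - a)) * (\<integral>\<^sup>+u. indicator {a..b} u * ennreal (\<eta> \<bar>h u\<bar>) \<partial>lborel)"
proof (cases "(\<integral>\<^sup>+u. indicator {a..b} u * ennreal (\<eta> \<bar>h u\<bar>) \<partial>lborel) = \<infinity>")
  case True
  then show ?thesis using ab by (simp add: ennreal_mult_top)
next
  case False
  define c where "c = 1 / (b - a)"
  have c: "0 < c" using ab by (simp add: c_def)
  define d where "d = (\<lambda>u. c * indicator {a..b} u :: real)"
  have d[measurable]: "d \<in> borel_measurable lborel" unfolding d_def by measurable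
  have dnn: "\<And>u. 0 \<le> d u" using c by (auto simp: d_def)
  define M where "M = density lborel (\<lambda>u. ennreal (d u))"
  have sM: "space M = UNIV" by (simp add: M_def)
  have "emeasure M (space M) = (\<integral>\<^sup>+u. ennreal (d u) \<partial>lborel)"
    unfolding M_def by (simp add: emeasure_density)
  also have "\<dots> = ennreal c * emeasure lborel {a..b}"
    unfolding d_def using c by (subst nn_integral_cmult_indicator[symmetric]) (auto intro!: nn_integral_cong simp: ennreal_mult' split: split_indicator)
  also have "\<dots> = 1" using ab c by (simp add: c_def ennreal_mult[symmetric])
  finally have "prob_space M" by (intro prob_spaceI)
  then interpret M: prob_space M .
  define q where "q = (\<lambda>v. \<eta> (max v 0))"
  have qc: "convex_on UNIV q" unfolding q_def by (rule convex_ext[OF eta])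
  have hbM[measurable]: "h \<in> borel_measurable M" by (simp add: M_def)
  have eb[measurable]: "(\<lambda>u. \<eta> \<bar>h u\<bar>) \<in> borel_measurable borel" by (rule phi_measurable[OF eta(1) hb])
  have intX: "integrable M (\<lambda>u. \<bar>h u\<bar>)"
    unfolding M_def
  proof (subst integrable_density)
    show "integrable lborel (\<lambda>x. d x *\<^sub>R \<bar>h x\<bar>)"
    proof -
      have "integrable lborel (\<lambda>x. c * \<bar>indicator {a..b} x * h x\<bar>)" using hi by auto
      moreover have "(\<lambda>x. c * \<bar>indicator {a..b} x * h x\<bar>) = (\<lambda>x. d x *\<^sub>R \<bar>h x\<bar>)"
        by (auto simp: d_def abs_mult split: split_indicator)
      ultimately show ?thesis by simp
    qed
  qed (use dnn in auto)
  have intE: "integrable lborel (\<lambda>u. indicator {a..b} u * \<eta> \<bar>h u\<bar>)"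
  proof (rule integrableI_bounded)
    have "(\<integral>\<^sup>+u. ennreal (norm (indicator {a..b} u * \<eta> \<bar>h u\<bar>)) \<partial>lborel) = (\<integral>\<^sup>+u. indicator {a..b} u * ennreal (\<eta> \<bar>h u\<bar>) \<partial>lborel)"
      using phi_nonneg[OF eta(1)] by (intro nn_integral_cong) (auto split: split_indicator)
    then show "(\<integral>\<^sup>+u. ennreal (norm (indicator {a..b} u * \<eta> \<bar>h u\<bar>)) \<partial>lborel) < \<infinity>"
      using False by (simp add: top.not_eq_extremum)
  qed measurable
  have intQ: "integrable M (\<lambda>u. q \<bar>h u\<bar>)"
    unfolding M_def q_def
  proof (subst integrable_density)
    show "integrable lborel (\<lambda>x. d x *\<^sub>R \<eta> (max \<bar>h x\<bar> 0))"
    proof -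
      have "integrable lborel (\<lambda>x. c * (indicator {a..b} x * \<eta> \<bar>h x\<bar>))" using intE by auto
      moreover have "(\<lambda>x. c * (indicator {a..b} x * \<eta> \<bar>h x\<bar>)) = (\<lambda>x. d x *\<^sub>R \<eta> (max \<bar>h x\<bar> 0))"
        by (auto simp: d_def split: split_indicator)
      ultimately show ?thesis by simp
    qed
    show "(\<lambda>x. \<eta> (max \<bar>h x\<bar> 0)) \<in> borel_measurable lborel"
      using eb by simp
  qed (use dnn in auto)
  have J: "q (M.expectation (\<lambda>u. \<bar>h u\<bar>)) \<le> M.expectation (\<lambda>u. q \<bar>h u\<bar>)"
    by (rule M.jensens_inequality[where I=UNIV, OF intX _ _ intQ]) (use qc in auto)
  have E1: "M.expectation (\<lambda>u. \<bar>h u\<bar>) = c * integral\<^sup>L lborel (\<lambda>u. indicator {a..b} u * \<bar>h u\<bar>)"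
  proof -
    have "M.expectation (\<lambda>u. \<bar>h u\<bar>) = integral\<^sup>L lborel (\<lambda>u. d u *\<^sub>R \<bar>h u\<bar>)"
      unfolding M_def by (rule integral_density) (use dnn in auto)
    also have "\<dots> = integral\<^sup>L lborel (\<lambda>u. c * (indicator {a..b} u * \<bar>h u\<bar>))"
      by (intro Bochner_Integration.integral_cong) (auto simp: d_def)
    finally show ?thesis by simp
  qed
  have E2: "M.expectation (\<lambda>u. q \<bar>h u\<bar>) = c * integral\<^sup>L lborel (\<lambda>u. indicator {a..b} u * \<eta> \<bar>h u\<bar>)"
  proof -
    have "M.expectation (\<lambda>u. q \<bar>h u\<bar>) = integral\<^sup>L lborel (\<lambda>u. d u *\<^sub>R q \<bar>h u\<bar>)"
      unfolding M_def by (rule integral_density) (use dnn eb in \<open>auto simp: q_def\<close>)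
    also have "\<dots> = integral\<^sup>L lborel (\<lambda>u. c * (indicator {a..b} u * \<eta> \<bar>h u\<bar>))"
      by (intro Bochner_Integration.integral_cong) (auto simp: d_def q_def)
    finally show ?thesis by simp
  qed
  have A: "\<bar>integral\<^sup>L lborel (\<lambda>u. indicator {a..b} u * h u)\<bar> \<le> integral\<^sup>L lborel (\<lambda>u. indicator {a..b} u * \<bar>h u\<bar>)"
  proof -
    have "\<bar>integral\<^sup>L lborel (\<lambda>u. indicator {a..b} u * h u)\<bar> \<le> integral\<^sup>L lborel (\<lambda>u. \<bar>indicator {a..b} u * h u\<bar>)"
      by (rule integral_abs_bound)
    also have "\<dots> = integral\<^sup>L lborel (\<lambda>u. indicator {a..b} u * \<bar>h u\<bar>)"
      by (intro Bochner_Integration.integral_cong) (auto simp: abs_mult)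
    finally show ?thesis .
  qed
  have nnI: "0 \<le> integral\<^sup>L lborel (\<lambda>u. indicator {a..b} u * \<bar>h u\<bar>)" by (intro Bochner_Integration.integral_nonneg) auto
  have "\<eta> \<bar>c * integral\<^sup>L lborel (\<lambda>u. indicator {a..b} u * h u)\<bar> \<le> \<eta> (c * integral\<^sup>L lborel (\<lambda>u. indicator {a..b} u * \<bar>h u\<bar>))"
    using A c by (intro phi_mono[OF eta(1)]) (auto simp: abs_mult)
  also have "\<dots> = q (M.expectation (\<lambda>u. \<bar>h u\<bar>))" unfolding E1 q_def using c nnI by simp
  also have "\<dots> \<le> c * integral\<^sup>L lborel (\<lambda>u. indicator {a..b} u * \<eta> \<bar>h u\<bar>)" using J E2 by simp
  finally have R: "\<eta> \<bar>c * integral\<^sup>L lborel (\<lambda>u. indicator {a..b} u * h u)\<bar> \<le> c * integral\<^sup>L lborel (\<lambda>u. indicator {a..b} u * \<eta> \<bar>h u\<bar>)" .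
  have NN: "(\<integral>\<^sup>+u. indicator {a..b} u * ennreal (\<eta> \<bar>h u\<bar>) \<partial>lborel) = ennreal (integral\<^sup>L lborel (\<lambda>u. indicator {a..b} u * \<eta> \<bar>h u\<bar>))"
  proof -
    have "(\<integral>\<^sup>+u. indicator {a..b} u * ennreal (\<eta> \<bar>h u\<bar>) \<partial>lborel) = (\<integral>\<^sup>+u. ennreal (indicator {a..b} u * \<eta> \<bar>h u\<bar>) \<partial>lborel)"
      by (intro nn_integral_cong) (auto split: split_indicator)
    also have "\<dots> = ennreal (integral\<^sup>L lborel (\<lambda>u. indicator {a..b} u * \<eta> \<bar>h u\<bar>))"
      by (rule nn_integral_eq_integral[OF intE]) (use phi_nonneg[OF eta(1)] in auto)
    finally show ?thesis .
  qed
  have nnE: "0 \<le> integral\<^sup>L lborel (\<lambda>u. indicator {a..b} u * \<eta> \<bar>h u\<bar>)"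
    using phi_nonneg[OF eta(1)] by (intro Bochner_Integration.integral_nonneg) auto
  show ?thesis unfolding NN c_def[symmetric]
    using R c nnE by (simp add: ennreal_mult[symmetric] ennreal_leI)
qed

lemma nsum_real:
  assumes "\<And>k. 0 \<le> g k" "nsum g < \<infinity>"
  shows "g summable_on UNIV" "nsum g = ennreal (infsum g UNIV)"
    "\<And>F. finite F \<Longrightarrow> sum g F \<le> infsum g UNIV"
proof -
  show s: "g summable_on UNIV" by (rule nsum_fin_summable[OF assms])
  show "nsum g = ennreal (infsum g UNIV)" by (rule nsum_of_summable[OF assms(1) s])
  show "sum g F \<le> infsum g UNIV" if "finite F" for F
    by (rule finite_sum_le_infsum[OF s that]) (use assms in auto)
qed

lemma pw_abstract:
  fixes chi :: "real \<Rightarrow> real \<Rightarrow> real" and z V V' :: "int \<Rightarrow> real"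
  assumes phi: "phi_function \<phi>" "convex_on {0..} \<phi>" and psi: "phi_function \<psi>" and eta: "phi_function \<eta>"
    and chi3: "\<And>x u v. \<bar>chi x u - chi x v\<bar> \<le> L x * \<psi> \<bar>u - v\<bar>"
    and Lnn: "\<And>x. 0 \<le> L x"
    and sumL: "\<And>F. finite F \<Longrightarrow> sum (\<lambda>k. L (z k)) F \<le> m" and m: "0 < m"
    and chi1: "(\<lambda>k. chi (z k) vz) summable_on UNIV"
    and mu: "0 < \<mu>" and lam: "0 < lam"
    and H: "\<And>v. 0 \<le> v \<Longrightarrow> \<phi> (3 * \<mu> * m * \<psi> v) \<le> \<eta> (lam * v)"
    and T: "\<bar>infsum (\<lambda>k. chi (z k) vz) UNIV - vz\<bar> \<le> R0"
  shows "ennreal (\<phi> (\<mu> * \<bar>infsum (\<lambda>k. chi (z k) (V k)) UNIV - vz\<bar>))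
    \<le> ennreal (1/3) * (ennreal (1 / m) * nsum (\<lambda>k. L (z k) * \<eta> (lam * \<bar>V k - V' k\<bar>))
        + ennreal (1 / m) * nsum (\<lambda>k. L (z k) * \<eta> (lam * \<bar>V' k - vz\<bar>))
        + ennreal (\<phi> (3 * \<mu> * R0)))"
proof -
  define N1 where "N1 = nsum (\<lambda>k. L (z k) * \<eta> (lam * \<bar>V k - V' k\<bar>))"
  define N2 where "N2 = nsum (\<lambda>k. L (z k) * \<eta> (lam * \<bar>V' k - vz\<bar>))"
  have R0: "0 \<le> R0" using T by linarith
  have e1nn: "\<And>k. 0 \<le> L (z k) * \<eta> (lam * \<bar>V k - V' k\<bar>)"
    and e2nn: "\<And>k. 0 \<le> L (z k) * \<eta> (lam * \<bar>V' k - vz\<bar>)"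
    using Lnn phi_nonneg[OF eta] lam by auto
  show ?thesis
  proof (cases "N1 = \<infinity> \<or> N2 = \<infinity>")
    case True
    then show ?thesis using m unfolding N1_def[symmetric] N2_def[symmetric]
      by (auto simp: ennreal_mult_top ennreal_top_mult)
  next
    case False
    then have N1f: "N1 < \<infinity>" and N2f: "N2 < \<infinity>" by (auto simp: top.not_eq_extremum)
    note r1 = nsum_real[OF e1nn N1f[unfolded N1_def]]
    note r2 = nsum_real[OF e2nn N2f[unfolded N2_def]]
    define I1 where "I1 = infsum (\<lambda>k. L (z k) * \<eta> (lam * \<bar>V k - V' k\<bar>)) UNIV"
    define I2 where "I2 = infsum (\<lambda>k. L (z k) * \<eta> (lam * \<bar>V' k - vz\<bar>)) UNIV"
    define b1 where "b1 = (\<lambda>k. L (z k) * \<psi> \<bar>V k - V' k\<bar>)"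
    define b2 where "b2 = (\<lambda>k. L (z k) * \<psi> \<bar>V' k - vz\<bar>)"
    have b1nn: "\<And>k. 0 \<le> b1 k" and b2nn: "\<And>k. 0 \<le> b2 k"
      unfolding b1_def b2_def using Lnn phi_nonneg[OF psi] by auto
    have gen: "(\<lambda>k. b k) summable_on UNIV \<and> \<phi> (3 * \<mu> * infsum b UNIV) \<le> I / m"
      if bdef: "b = (\<lambda>k. L (z k) * \<psi> (a k))" and a: "\<And>k. 0 \<le> a k"
        and Ifin: "\<And>F. finite F \<Longrightarrow> sum (\<lambda>k. L (z k) * \<eta> (lam * a k)) F \<le> I" for b a I
    proof -
      have bnn: "\<And>k. 0 \<le> b k" unfolding bdef using Lnn phi_nonneg[OF psi] a by auto
      have "(\<lambda>k. 3 * \<mu> * b k) summable_on UNIV \<and> \<phi> (infsum (\<lambda>k. 3 * \<mu> * b k) UNIV) \<le> I / m"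
      proof (rule sum_bound[OF phi(1)])
        show "0 \<le> 3 * \<mu> * b k" for k using bnn mu by auto
        fix F :: "int set" assume F: "finite F"
        have "\<phi> (sum (\<lambda>k. 3 * \<mu> * b k) F) = \<phi> (\<Sum>k\<in>F. L (z k) * (3 * \<mu> * \<psi> (a k)))"
          unfolding bdef by (simp add: algebra_simps)
        also have "\<dots> \<le> (\<Sum>k\<in>F. L (z k) / m * \<phi> (m * (3 * \<mu> * \<psi> (a k))))"
          by (rule finite_jensen[OF phi F _ sumL[OF F] m]) (use Lnn mu phi_nonneg[OF psi] a in auto)
        also have "\<dots> \<le> (\<Sum>k\<in>F. L (z k) / m * \<eta> (lam * a k))"
        proof (rule sum_mono)
          fix k
          have "\<phi> (m * (3 * \<mu> * \<psi> (a k))) = \<phi> (3 * \<mu> * m * \<psi> (a k))" by (simp add: algebra_simps)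
          also have "\<dots> \<le> \<eta> (lam * a k)" by (rule H[OF a])
          finally show "L (z k) / m * \<phi> (m * (3 * \<mu> * \<psi> (a k))) \<le> L (z k) / m * \<eta> (lam * a k)"
            using Lnn m by (intro mult_left_mono) auto
        qed
        also have "\<dots> = (\<Sum>k\<in>F. L (z k) * \<eta> (lam * a k)) / m" by (simp add: sum_divide_distrib)
        also have "\<dots> \<le> I / m" using Ifin[OF F] m by (simp add: divide_right_mono)
        finally show "\<phi> (sum (\<lambda>k. 3 * \<mu> * b k) F) \<le> I / m" .
      qed
      moreover have "b summable_on UNIV"
      proof -
        have "(\<lambda>k. (1 / (3 * \<mu>)) * (3 * \<mu> * b k)) summable_on UNIV"
          by (rule summable_on_cmult_right[OF conjunct1[OF calculation]])
        moreover have "(\<lambda>k. (1 / (3 * \<mu>)) * (3 * \<mu> * b k)) = b" using mu by (auto simp: fun_eq_iff)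
        ultimately show ?thesis by simp
      qed
      moreover have "infsum (\<lambda>k. 3 * \<mu> * b k) UNIV = 3 * \<mu> * infsum b UNIV"
        by (rule infsum_cmult_right') 
      ultimately show ?thesis by simp
    qed
    have G1: "b1 summable_on UNIV \<and> \<phi> (3 * \<mu> * infsum b1 UNIV) \<le> I1 / m"
      by (rule gen[OF b1_def]) (use r1(3) in \<open>auto simp: I1_def\<close>)
    have G2: "b2 summable_on UNIV \<and> \<phi> (3 * \<mu> * infsum b2 UNIV) \<le> I2 / m"
      by (rule gen[OF b2_def]) (use r2(3) in \<open>auto simp: I2_def\<close>)
    define D where "D = (\<lambda>k. chi (z k) (V k) - chi (z k) vz)"
    have Db: "\<bar>D k\<bar> \<le> b1 k + b2 k" for k
    proof -
      have "\<bar>D k\<bar> \<le> \<bar>chi (z k) (V k) - chi (z k) (V' k)\<bar> + \<bar>chi (z k) (V' k) - chi (z k) vz\<bar>"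
        unfolding D_def by linarith
      also have "\<dots> \<le> b1 k + b2 k" unfolding b1_def b2_def by (intro add_mono chi3)
      finally show ?thesis .
    qed
    have sb12: "(\<lambda>k. b1 k + b2 k) summable_on UNIV" using G1 G2 by (intro summable_on_add) auto
    have absD: "(\<lambda>k. \<bar>D k\<bar>) summable_on UNIV"
      by (rule summable_on_comparison_test[OF sb12]) (use Db in auto)
    have sD: "D summable_on UNIV"
      using absD summable_on_iff_abs_summable_on_real[of D UNIV] by (simp add: real_norm_def)
    have eqS: "(\<lambda>k. chi (z k) (V k)) = (\<lambda>k. D k + chi (z k) vz)" by (auto simp: D_def)
    have S: "infsum (\<lambda>k. chi (z k) (V k)) UNIV = infsum D UNIV + infsum (\<lambda>k. chi (z k) vz) UNIV"
      unfolding eqS by (rule infsum_add[OF sD chi1])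
    have "\<bar>infsum D UNIV\<bar> \<le> infsum (\<lambda>k. \<bar>D k\<bar>) UNIV"
      using norm_infsum_bound[of D UNIV] absD by (simp add: real_norm_def)
    also have "\<dots> \<le> infsum (\<lambda>k. b1 k + b2 k) UNIV" by (rule infsum_mono[OF absD sb12 Db])
    also have "\<dots> = infsum b1 UNIV + infsum b2 UNIV" using G1 G2 by (intro infsum_add) auto
    finally have absDb: "\<bar>infsum D UNIV\<bar> \<le> infsum b1 UNIV + infsum b2 UNIV" .
    have P1: "0 \<le> infsum b1 UNIV" and P2: "0 \<le> infsum b2 UNIV" using b1nn b2nn by (auto intro: infsum_nonneg)
    have "\<phi> (\<mu> * \<bar>infsum (\<lambda>k. chi (z k) (V k)) UNIV - vz\<bar>)
        \<le> \<phi> ((3 * \<mu> * infsum b1 UNIV + 3 * \<mu> * infsum b2 UNIV + 3 * \<mu> * R0) / 3)"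
    proof (rule phi_mono[OF phi(1)])
      show "0 \<le> \<mu> * \<bar>infsum (\<lambda>k. chi (z k) (V k)) UNIV - vz\<bar>" using mu by simp
      have bnd: "\<bar>infsum (\<lambda>k. chi (z k) (V k)) UNIV - vz\<bar> \<le> infsum b1 UNIV + infsum b2 UNIV + R0"
        unfolding S using absDb T by linarith
      then show "\<mu> * \<bar>infsum (\<lambda>k. chi (z k) (V k)) UNIV - vz\<bar> \<le> (3 * \<mu> * infsum b1 UNIV + 3 * \<mu> * infsum b2 UNIV + 3 * \<mu> * R0) / 3"
      proof -
        have "\<mu> * \<bar>infsum (\<lambda>k. chi (z k) (V k)) UNIV - vz\<bar> \<le> \<mu> * (infsum b1 UNIV + infsum b2 UNIV + R0)"
          using bnd mu by (intro mult_left_mono) auto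
        also have "\<dots> = (3 * \<mu> * infsum b1 UNIV + 3 * \<mu> * infsum b2 UNIV + 3 * \<mu> * R0) / 3"
          by (simp add: algebra_simps)
        finally show ?thesis .
      qed
    qed
    also have "\<dots> \<le> (\<phi> (3 * \<mu> * infsum b1 UNIV) + \<phi> (3 * \<mu> * infsum b2 UNIV) + \<phi> (3 * \<mu> * R0)) / 3"
      by (rule convex3[OF phi]) (use mu P1 P2 R0 in auto)
    also have "\<dots> \<le> (I1 / m + I2 / m + \<phi> (3 * \<mu> * R0)) / 3" using G1 G2 by (intro divide_right_mono add_mono) auto
    finally have fin: "\<phi> (\<mu> * \<bar>infsum (\<lambda>k. chi (z k) (V k)) UNIV - vz\<bar>) \<le> 1/3 * (1/m * I1 + 1/m * I2 + \<phi> (3 * \<mu> * R0))"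
      by simp
    have I1nn: "0 \<le> I1" and I2nn: "0 \<le> I2" unfolding I1_def I2_def using e1nn e2nn by (auto intro: infsum_nonneg)
    have phR: "0 \<le> \<phi> (3 * \<mu> * R0)" using phi_nonneg[OF phi(1)] mu R0 by simp
    have "ennreal (1/3) * (ennreal (1 / m) * N1 + ennreal (1 / m) * N2 + ennreal (\<phi> (3 * \<mu> * R0)))
        = ennreal (1/3 * (1/m * I1 + 1/m * I2 + \<phi> (3 * \<mu> * R0)))"
      unfolding N1_def N2_def r1(2) r2(2) I1_def[symmetric] I2_def[symmetric]
      using m I1nn I2nn phR by (simp add: ennreal_mult[symmetric] ennreal_plus[symmetric] del: ennreal_plus)
    then show ?thesis unfolding N1_def N2_def using fin by (simp add: ennreal_leI)
  qed
qed

lemma lint_lborel: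
  fixes h :: "real \<Rightarrow> real"
  assumes [measurable]: "h \<in> borel_measurable borel"
  shows "(LINT u:{a..b}|lebesgue. h u) = integral\<^sup>L lborel (\<lambda>u. indicator {a..b} u * h u)"
proof -
  have "(LINT u:{a..b}|lebesgue. h u) = integral\<^sup>L lborel (\<lambda>u. indicator {a..b} u *\<^sub>R h u)"
    unfolding set_lebesgue_integral_def by (rule integral_completion) measurable
  then show ?thesis by simp
qed

lemma shift_int:
  fixes f :: "real \<Rightarrow> real"
  assumes fi: "\<And>a b. integrable lborel (\<lambda>u. indicator {a..b} u * f u)"
  shows "integrable lborel (\<lambda>u. indicator {a..b} u * f (x + u - c))"
proof -
  have "integrable lborel (\<lambda>u. (\<lambda>v. indicator {x + a - c..x + b - c} v * f v) ((x - c) + 1 * u))"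
    by (rule lborel_integrable_real_affine[OF fi]) simp
  moreover have "(\<lambda>u. (\<lambda>v. indicator {x + a - c..x + b - c} v * f v) ((x - c) + 1 * u))
      = (\<lambda>u. indicator {a..b} u * f (x + u - c))"
    by (auto simp: fun_eq_iff split: split_indicator simp: algebra_simps)
  ultimately show ?thesis by simp
qed

lemma avg_jensen:
  assumes eta: "phi_function \<eta>" "convex_on {0..} \<eta>" and ab: "a < b" and lam: "0 < lam"
    and hb[measurable]: "h \<in> borel_measurable borel"
    and hi: "integrable lborel (\<lambda>u. indicator {a..b} u * h u)"
  shows "ennreal (\<eta> (lam * \<bar>1 / (b - a) * (LINT u:{a..b}|lebesgue. h u)\<bar>))
     \<le> ennreal (1 / (b - a)) * (\<integral>\<^sup>+u. indicator {a..b} u * ennreal (\<eta> \<bar>lam * h u\<bar>) \<partial>lborel)"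
proof -
  have hb2[measurable]: "(\<lambda>u. lam * h u) \<in> borel_measurable borel" by measurable
  have hi2: "integrable lborel (\<lambda>u. indicator {a..b} u * (lam * h u))"
    using integrable_mult_right[OF hi, of lam] by (simp add: algebra_simps)
  have J: "ennreal (\<eta> \<bar>1 / (b - a) * integral\<^sup>L lborel (\<lambda>u. indicator {a..b} u * (lam * h u))\<bar>)
     \<le> ennreal (1 / (b - a)) * (\<integral>\<^sup>+u. indicator {a..b} u * ennreal (\<eta> \<bar>lam * h u\<bar>) \<partial>lborel)"
    by (rule jensen_int[OF eta ab hb2 hi2])
  have "integral\<^sup>L lborel (\<lambda>u. indicator {a..b} u * (lam * h u)) = lam * integral\<^sup>L lborel (\<lambda>u. indicator {a..b} u * h u)"
    by (simp add: algebra_simps)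
  then have eq: "\<bar>1 / (b - a) * integral\<^sup>L lborel (\<lambda>u. indicator {a..b} u * (lam * h u))\<bar>
      = lam * \<bar>1 / (b - a) * (LINT u:{a..b}|lebesgue. h u)\<bar>"
    using lam ab by (simp add: lint_lborel abs_mult)
  from J show ?thesis by (simp only: eq)
qed

definition Vk :: "(int \<Rightarrow> real) \<Rightarrow> real \<Rightarrow> (real \<Rightarrow> real) \<Rightarrow> int \<Rightarrow> real" where
  "Vk t w f k = (w / (t (k + 1) - t k)) * (LINT u:{t k / w .. t (k + 1) / w}|lebesgue. f u)"

definition Wk :: "(int \<Rightarrow> real) \<Rightarrow> real \<Rightarrow> (real \<Rightarrow> real) \<Rightarrow> real \<Rightarrow> int \<Rightarrow> real" where
  "Wk t w f x k = (w / (t (k + 1) - t k)) * (LINT u:{t k / w .. t (k + 1) / w}|lebesgue. f (x + u - t k / w))"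

lemma interval_facts:
  assumes samp: "sampling_sequence t \<delta> \<Delta>" and w: "0 < w"
  shows "t k / w < t (k + 1) / w" "t (k + 1) / w - t k / w = (t (k + 1) - t k) / w"
    "1 / (t (k + 1) / w - t k / w) = w / (t (k + 1) - t k)"
proof -
  have d: "t (k + 1) - t k \<ge> \<delta>" "\<delta> > 0" using samp_props[OF samp] by auto
  then show "t k / w < t (k + 1) / w" using w by (simp add: divide_strict_right_mono)
  show e: "t (k + 1) / w - t k / w = (t (k + 1) - t k) / w" by (simp add: diff_divide_distrib)
  show "1 / (t (k + 1) / w - t k / w) = w / (t (k + 1) - t k)" unfolding e by simp
qed

lemma lint_const:
  "integral\<^sup>L lborel (\<lambda>u. indicator {a..b} u * (C::real)) = C * (b - a)" if "a \<le> b"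
  using that by simp

lemma bound_a1:
  fixes f :: "real \<Rightarrow> real"
  assumes eta: "phi_function \<eta>" "convex_on {0..} \<eta>" and samp: "sampling_sequence t \<delta> \<Delta>" and w: "0 < w"
    and fb[measurable]: "f \<in> borel_measurable borel"
    and fi: "\<And>a b. integrable lborel (\<lambda>u. indicator {a..b} u * f u)" and lam: "0 < lam"
  shows "ennreal (\<eta> (lam * \<bar>Vk t w f k - Wk t w f x k\<bar>))
    \<le> ennreal (w / (t (k + 1) - t k)) * (\<integral>\<^sup>+u. indicator {t k / w .. t (k + 1) / w} u
          * ennreal (\<eta> \<bar>lam * (f u - f (x + u - t k / w))\<bar>) \<partial>lborel)"
proof -
  define a where "a = t k / w"
  define b where "b = t (k + 1) / w"
  note I = interval_facts[OF samp w, of k, folded a_def b_def]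
  have hb[measurable]: "(\<lambda>u. f u - f (x + u - a)) \<in> borel_measurable borel" by measurable
  have i1: "integrable lborel (\<lambda>u. indicator {a..b} u * f u)" by (rule fi)
  have i2: "integrable lborel (\<lambda>u. indicator {a..b} u * f (x + u - a))" by (rule shift_int[OF fi])
  have hi: "integrable lborel (\<lambda>u. indicator {a..b} u * (f u - f (x + u - a)))"
    using Bochner_Integration.integrable_diff[OF i1 i2] by (simp add: algebra_simps)
  have eq: "Vk t w f k - Wk t w f x k = 1 / (b - a) * (LINT u:{a..b}|lebesgue. f u - f (x + u - a))"
  proof -
    have "(LINT u:{a..b}|lebesgue. f u - f (x + u - a))
        = (LINT u:{a..b}|lebesgue. f u) - (LINT u:{a..b}|lebesgue. f (x + u - a))"
      unfolding lint_lborel[OF hb] lint_lborel[OF fb]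
      by (subst lint_lborel) (measurable, use Bochner_Integration.integral_diff[OF i1 i2] in \<open>simp add: algebra_simps\<close>)
    moreover have "Vk t w f k - Wk t w f x k = 1 / (b - a) * ((LINT u:{a..b}|lebesgue. f u) - (LINT u:{a..b}|lebesgue. f (x + u - a)))"
      unfolding Vk_def Wk_def I(3) a_def[symmetric] b_def[symmetric] by (simp add: right_diff_distrib)
    ultimately show ?thesis by simp
  qed
  show ?thesis unfolding eq I(3)[symmetric] a_def[symmetric] b_def[symmetric]
    by (rule avg_jensen[OF eta I(1) lam hb hi])
qed

lemma bound_a2:
  fixes f :: "real \<Rightarrow> real"
  assumes eta: "phi_function \<eta>" "convex_on {0..} \<eta>" and samp: "sampling_sequence t \<delta> \<Delta>" and w: "0 < w"
    and fb[measurable]: "f \<in> borel_measurable borel"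
    and fi: "\<And>a b. integrable lborel (\<lambda>u. indicator {a..b} u * f u)" and lam: "0 < lam"
  shows "ennreal (\<eta> (lam * \<bar>Wk t w f x k - f x\<bar>))
    \<le> ennreal (w / (t (k + 1) - t k)) * (\<integral>\<^sup>+u. indicator {t k / w .. t (k + 1) / w} u
          * ennreal (\<eta> \<bar>lam * (f (x + u - t k / w) - f x)\<bar>) \<partial>lborel)"
proof -
  define a where "a = t k / w"
  define b where "b = t (k + 1) / w"
  note I = interval_facts[OF samp w, of k, folded a_def b_def]
  have hb[measurable]: "(\<lambda>u. f (x + u - a) - f x) \<in> borel_measurable borel" by measurable
  have i2: "integrable lborel (\<lambda>u. indicator {a..b} u * f (x + u - a))" by (rule shift_int[OF fi])
  have i1: "integrable lborel (\<lambda>u. indicator {a..b} u * f x)"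
  proof -
    have "integrable lborel (\<lambda>u. indicator {a..b} u *\<^sub>R f x)"
      by (rule integrable_indicator) (use I(1) in auto)
    then show ?thesis by simp
  qed
  have hi: "integrable lborel (\<lambda>u. indicator {a..b} u * (f (x + u - a) - f x))"
    using Bochner_Integration.integrable_diff[OF i2 i1] by (simp add: algebra_simps)
  have eq: "Wk t w f x k - f x = 1 / (b - a) * (LINT u:{a..b}|lebesgue. f (x + u - a) - f x)"
  proof -
    have "(LINT u:{a..b}|lebesgue. f (x + u - a) - f x)
        = (LINT u:{a..b}|lebesgue. f (x + u - a)) - f x * (b - a)"
      unfolding lint_lborel[OF hb]
      by (subst lint_lborel) (measurable, use Bochner_Integration.integral_diff[OF i2 i1] I(1) in \<open>simp add: algebra_simps\<close>)
    moreover have "Wk t w f x k = 1 / (b - a) * (LINT u:{a..b}|lebesgue. f (x + u - a))"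
      unfolding Wk_def I(3) a_def[symmetric] b_def[symmetric] by simp
    moreover have "1 / (b - a) * (B - f x * (b - a)) = 1 / (b - a) * B - f x" for B
      using I(1) by (simp add: field_simps)
    ultimately show ?thesis by simp
  qed
  show ?thesis unfolding eq I(3)[symmetric] a_def[symmetric] b_def[symmetric]
    by (rule avg_jensen[OF eta I(1) lam hb hi])
qed

lemma pw_concrete:
  fixes f :: "real \<Rightarrow> real"
  assumes phi: "phi_function \<phi>" "convex_on {0..} \<phi>" and psi: "phi_function \<psi>"
    and eta: "phi_function \<eta>" "convex_on {0..} \<eta>"
    and samp: "sampling_sequence t \<delta> \<Delta>" and chi3: "kernel_chi3 chi L \<psi>"
    and L1: "cond_L1 L" and L2: "cond_L2 t L" and chi1: "kernel_chi1 t chi"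
    and m0: "0 < m0 t L" and w: "0 < w"
    and fb[measurable]: "f \<in> borel_measurable borel"
    and fi: "\<And>a b. integrable lborel (\<lambda>u. indicator {a..b} u * f u)" and lam: "0 < lam" and mu: "0 < \<mu>"
    and H: "\<And>v. 0 \<le> v \<Longrightarrow> \<phi> (3 * \<mu> * m0 t L * \<psi> v) \<le> \<eta> (lam * v)"
    and T: "\<bar>infsum (\<lambda>k. chi (w * x - t k) (f x)) UNIV - f x\<bar> \<le> R0"
  shows "ennreal (\<phi> (\<mu> * \<bar>sampling_kantorovich t chi w f x - f x\<bar>))
    \<le> ennreal (1/3) * (ennreal (1 / m0 t L) * (\<integral>\<^sup>+k. ennreal (L (w * x - t k)) * (ennreal (w / (t (k + 1) - t k)) *
            (\<integral>\<^sup>+u. indicator {t k / w .. t (k + 1) / w} u * ennreal (\<eta> \<bar>lam * (f u - f (x + u - t k / w))\<bar>) \<partial>lborel)) \<partial>count_space UNIV)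
        + ennreal (1 / m0 t L) * (\<integral>\<^sup>+k. ennreal (L (w * x - t k)) * (ennreal (w / (t (k + 1) - t k)) *
            (\<integral>\<^sup>+u. indicator {t k / w .. t (k + 1) / w} u * ennreal (\<eta> \<bar>lam * (f (x + u - t k / w) - f x)\<bar>) \<partial>lborel)) \<partial>count_space UNIV)
        + ennreal (\<phi> (3 * \<mu> * R0)))"
proof -
  have Lnn: "\<And>x. 0 \<le> L x" and c3: "\<And>x u v. \<bar>chi x u - chi x v\<bar> \<le> L x * \<psi> \<bar>u - v\<bar>"
    using chi3 unfolding kernel_chi3_def by auto
  have sumL: "sum (\<lambda>k. L (w * x - t k)) F \<le> m0 t L" if F: "finite F" for F
  proof -
    have "sum (\<lambda>k. L (w * x - t k)) F \<le> infsum (\<lambda>k. L (w * x - t k)) UNIV"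
      by (rule finite_sum_le_infsum[OF m0_props(1)[OF samp chi3 L1 L2] F]) (use Lnn in auto)
    also have "\<dots> \<le> m0 t L" by (rule m0_props(2)[OF samp chi3 L1 L2])
    finally show ?thesis .
  qed
  have c1: "(\<lambda>k. chi (w * x - t k) (f x)) summable_on UNIV"
  proof -
    have "(\<lambda>k. \<bar>chi (w * x - t k) (f x)\<bar>) summable_on UNIV" using chi1 w unfolding kernel_chi1_def by blast
    then show ?thesis using summable_on_iff_abs_summable_on_real[of "\<lambda>k. chi (w * x - t k) (f x)" UNIV]
      by (simp add: real_norm_def)
  qed
  have S: "sampling_kantorovich t chi w f x = infsum (\<lambda>k. chi (w * x - t k) (Vk t w f k)) UNIV"
    unfolding sampling_kantorovich_def Vk_def ..
  have main: "ennreal (\<phi> (\<mu> * \<bar>infsum (\<lambda>k. chi (w * x - t k) (Vk t w f k)) UNIV - f x\<bar>))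
    \<le> ennreal (1/3) * (ennreal (1 / m0 t L) * nsum (\<lambda>k. L (w * x - t k) * \<eta> (lam * \<bar>Vk t w f k - Wk t w f x k\<bar>))
        + ennreal (1 / m0 t L) * nsum (\<lambda>k. L (w * x - t k) * \<eta> (lam * \<bar>Wk t w f x k - f x\<bar>))
        + ennreal (\<phi> (3 * \<mu> * R0)))"
    by (rule pw_abstract[where z="\<lambda>k. w * x - t k" and V="Vk t w f" and V'="Wk t w f x" and vz="f x" and m="m0 t L", OF phi psi eta(1) c3 Lnn sumL m0 c1 mu lam H T])
  have n1: "nsum (\<lambda>k. L (w * x - t k) * \<eta> (lam * \<bar>Vk t w f k - Wk t w f x k\<bar>))
     \<le> (\<integral>\<^sup>+k. ennreal (L (w * x - t k)) * (ennreal (w / (t (k + 1) - t k)) *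
            (\<integral>\<^sup>+u. indicator {t k / w .. t (k + 1) / w} u * ennreal (\<eta> \<bar>lam * (f u - f (x + u - t k / w))\<bar>) \<partial>lborel)) \<partial>count_space UNIV)"
    unfolding nsum_def
  proof (intro nn_integral_mono)
    fix k
    have "ennreal (L (w * x - t k) * \<eta> (lam * \<bar>Vk t w f k - Wk t w f x k\<bar>))
        = ennreal (L (w * x - t k)) * ennreal (\<eta> (lam * \<bar>Vk t w f k - Wk t w f x k\<bar>))"
      by (rule ennreal_mult) (use Lnn phi_nonneg[OF eta(1)] lam in auto)
    also have "\<dots> \<le> ennreal (L (w * x - t k)) * (ennreal (w / (t (k + 1) - t k)) *
            (\<integral>\<^sup>+u. indicator {t k / w .. t (k + 1) / w} u * ennreal (\<eta> \<bar>lam * (f u - f (x + u - t k / w))\<bar>) \<partial>lborel))"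
      by (intro mult_left_mono bound_a1[OF eta samp w fb fi lam]) auto
    finally show "ennreal (L (w * x - t k) * \<eta> (lam * \<bar>Vk t w f k - Wk t w f x k\<bar>)) \<le> \<dots>" .
  qed
  have n2: "nsum (\<lambda>k. L (w * x - t k) * \<eta> (lam * \<bar>Wk t w f x k - f x\<bar>))
     \<le> (\<integral>\<^sup>+k. ennreal (L (w * x - t k)) * (ennreal (w / (t (k + 1) - t k)) *
            (\<integral>\<^sup>+u. indicator {t k / w .. t (k + 1) / w} u * ennreal (\<eta> \<bar>lam * (f (x + u - t k / w) - f x)\<bar>) \<partial>lborel)) \<partial>count_space UNIV)"
    unfolding nsum_def
  proof (intro nn_integral_mono)
    fix k
    have "ennreal (L (w * x - t k) * \<eta> (lam * \<bar>Wk t w f x k - f x\<bar>))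
        = ennreal (L (w * x - t k)) * ennreal (\<eta> (lam * \<bar>Wk t w f x k - f x\<bar>))"
      by (rule ennreal_mult) (use Lnn phi_nonneg[OF eta(1)] lam in auto)
    also have "\<dots> \<le> ennreal (L (w * x - t k)) * (ennreal (w / (t (k + 1) - t k)) *
            (\<integral>\<^sup>+u. indicator {t k / w .. t (k + 1) / w} u * ennreal (\<eta> \<bar>lam * (f (x + u - t k / w) - f x)\<bar>) \<partial>lborel))"
      by (intro mult_left_mono bound_a2[OF eta samp w fb fi lam]) auto
    finally show "ennreal (L (w * x - t k) * \<eta> (lam * \<bar>Wk t w f x k - f x\<bar>)) \<le> \<dots>" .
  qed
  show ?thesis unfolding S
    by (rule order.trans[OF main]) (intro mult_left_mono add_mono order.refl n1 n2; simp)
qed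

lemma shift_int_eq:
  fixes G :: "real \<Rightarrow> ennreal"
  assumes [measurable]: "G \<in> borel_measurable borel" and ab: "a \<le> b"
  shows "(\<integral>\<^sup>+u. indicator {a..b} u * G (u - a) \<partial>lborel) = (\<integral>\<^sup>+s. indicator {0..b - a} s * G s \<partial>lborel)"
proof -
  have "(\<integral>\<^sup>+u. indicator {a..b} u * G (u - a) \<partial>lborel) = ennreal \<bar>1\<bar> * (\<integral>\<^sup>+s. indicator {a..b} (a + 1 * s) * G ((a + 1 * s) - a) \<partial>lborel)"
    by (rule nn_integral_real_affine[where c=1 and t=a, of "\<lambda>u. indicator {a..b} u * G (u - a)"]) auto
  also have "\<dots> = (\<integral>\<^sup>+s. indicator {0..b - a} s * G s \<partial>lborel)"
    by (auto intro!: nn_integral_cong split: split_indicator)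
  finally show ?thesis .
qed

lemma A2_pointwise:
  fixes f :: "real \<Rightarrow> real"
  assumes eta: "phi_function \<eta>" and samp: "sampling_sequence t \<delta> \<Delta>" and w: "0 < w"
    and Lnn: "\<And>x. 0 \<le> L x" and sumL: "nsum (\<lambda>k. L (w * x - t k)) \<le> ennreal m" and m: "0 < m"
    and fb[measurable]: "f \<in> borel_measurable borel"
  shows "ennreal (1 / m) * (\<integral>\<^sup>+k. ennreal (L (w * x - t k)) * (ennreal (w / (t (k + 1) - t k)) *
            (\<integral>\<^sup>+u. indicator {t k / w .. t (k + 1) / w} u * ennreal (\<eta> \<bar>lam * (f (x + u - t k / w) - f x)\<bar>) \<partial>lborel)) \<partial>count_space UNIV)
      \<le> ennreal (w / \<delta>) * (\<integral>\<^sup>+s. indicator {0..\<Delta> / w} s * ennreal (\<eta> \<bar>lam * (f (x + s) - f x)\<bar>) \<partial>lborel)"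
proof -
  note [measurable] = phi_measurable[OF eta]
  define K where "K = (\<integral>\<^sup>+s. indicator {0..\<Delta> / w} s * ennreal (\<eta> \<bar>lam * (f (x + s) - f x)\<bar>) \<partial>lborel)"
  have dpos: "0 < \<delta>" using samp_props[OF samp] by auto
  have trm: "ennreal (L (w * x - t k)) * (ennreal (w / (t (k + 1) - t k)) *
            (\<integral>\<^sup>+u. indicator {t k / w .. t (k + 1) / w} u * ennreal (\<eta> \<bar>lam * (f (x + u - t k / w) - f x)\<bar>) \<partial>lborel))
       \<le> ennreal (L (w * x - t k)) * (ennreal (w / \<delta>) * K)" for k
  proof (intro mult_left_mono mult_mono)
    have D: "\<delta> \<le> t (k + 1) - t k" "t (k + 1) - t k \<le> \<Delta>" using samp_props[OF samp] by auto
    show "ennreal (w / (t (k + 1) - t k)) \<le> ennreal (w / \<delta>)"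
      using D dpos w by (intro ennreal_leI frac_le) auto
    note I = interval_facts[OF samp w, of k]
    have "(\<integral>\<^sup>+u. indicator {t k / w .. t (k + 1) / w} u * ennreal (\<eta> \<bar>lam * (f (x + u - t k / w) - f x)\<bar>) \<partial>lborel)
        = (\<integral>\<^sup>+u. indicator {t k / w .. t (k + 1) / w} u * (\<lambda>s. ennreal (\<eta> \<bar>lam * (f (x + s) - f x)\<bar>)) (u - t k / w) \<partial>lborel)"
      by (simp add: algebra_simps)
    also have "\<dots> = (\<integral>\<^sup>+s. indicator {0..t (k + 1) / w - t k / w} s * ennreal (\<eta> \<bar>lam * (f (x + s) - f x)\<bar>) \<partial>lborel)"
      by (rule shift_int_eq) (use I(1) in auto)
    also have "\<dots> \<le> K" unfolding K_def
    proof (intro nn_integral_mono)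
      fix s
      have "t (k + 1) / w - t k / w \<le> \<Delta> / w" unfolding I(2) using D w by (simp add: divide_right_mono)
      then show "indicator {0..t (k + 1) / w - t k / w} s * ennreal (\<eta> \<bar>lam * (f (x + s) - f x)\<bar>)
          \<le> indicator {0..\<Delta> / w} s * ennreal (\<eta> \<bar>lam * (f (x + s) - f x)\<bar>)"
        by (auto split: split_indicator)
    qed
    finally show "(\<integral>\<^sup>+u. indicator {t k / w .. t (k + 1) / w} u * ennreal (\<eta> \<bar>lam * (f (x + u - t k / w) - f x)\<bar>) \<partial>lborel) \<le> K" .
  qed auto
  have "(\<integral>\<^sup>+k. ennreal (L (w * x - t k)) * (ennreal (w / (t (k + 1) - t k)) *
            (\<integral>\<^sup>+u. indicator {t k / w .. t (k + 1) / w} u * ennreal (\<eta> \<bar>lam * (f (x + u - t k / w) - f x)\<bar>) \<partial>lborel)) \<partial>count_space UNIV)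
      \<le> (\<integral>\<^sup>+k. ennreal (L (w * x - t k)) * (ennreal (w / \<delta>) * K) \<partial>count_space UNIV)"
    by (intro nn_integral_mono trm)
  also have "\<dots> = nsum (\<lambda>k. L (w * x - t k)) * (ennreal (w / \<delta>) * K)"
    unfolding nsum_def by (rule nn_integral_multc) simp
  also have "\<dots> \<le> ennreal m * (ennreal (w / \<delta>) * K)"
    by (intro mult_right_mono sumL) simp
  finally have *: "(\<integral>\<^sup>+k. ennreal (L (w * x - t k)) * (ennreal (w / (t (k + 1) - t k)) *
            (\<integral>\<^sup>+u. indicator {t k / w .. t (k + 1) / w} u * ennreal (\<eta> \<bar>lam * (f (x + u - t k / w) - f x)\<bar>) \<partial>lborel)) \<partial>count_space UNIV) \<le> ennreal m * (ennreal (w / \<delta>) * K)" .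
  have "ennreal (1 / m) * (ennreal m * (ennreal (w / \<delta>) * K)) = ennreal (w / \<delta>) * K"
    using m by (simp add: mult.assoc[symmetric] ennreal_mult[symmetric])
  then show ?thesis using mult_left_mono[OF *, of "ennreal (1 / m)"] unfolding K_def by simp
qed

lemma modular_lborel: "modular \<eta> g = (\<integral>\<^sup>+x. ennreal (\<eta> \<bar>g x\<bar>) \<partial>lborel)"
  unfolding modular_def by (simp add: nn_integral_completion)

lemma K_integral:
  fixes f :: "real \<Rightarrow> real"
  assumes eta: "phi_function \<eta>" and fb[measurable]: "f \<in> borel_measurable borel" and D: "0 \<le> D"
  shows "(\<integral>\<^sup>+x. (\<integral>\<^sup>+s. indicator {0..D} s * ennreal (\<eta> \<bar>lam * (f (x + s) - f x)\<bar>) \<partial>lborel) \<partial>lborel)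
     \<le> ennreal D * modulus \<eta> lam f D"
proof -
  note [measurable] = phi_measurable[OF eta]
  have "(\<integral>\<^sup>+x. (\<integral>\<^sup>+s. indicator {0..D} s * ennreal (\<eta> \<bar>lam * (f (x + s) - f x)\<bar>) \<partial>lborel) \<partial>lborel)
     = (\<integral>\<^sup>+s. (\<integral>\<^sup>+x. indicator {0..D} s * ennreal (\<eta> \<bar>lam * (f (x + s) - f x)\<bar>) \<partial>lborel) \<partial>lborel)"
    by (rule lborel_pair.Fubini'[symmetric]) measurable
  also have "\<dots> = (\<integral>\<^sup>+s. indicator {0..D} s * modular \<eta> (\<lambda>x. lam * (f (x + s) - f x)) \<partial>lborel)"
    unfolding modular_lborel by (intro nn_integral_cong nn_integral_cmult) measurable
  also have "\<dots> \<le> (\<integral>\<^sup>+s. indicator {0..D} s * modulus \<eta> lam f D \<partial>lborel)"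
  proof (intro nn_integral_mono)
    fix s
    show "indicator {0..D} s * modular \<eta> (\<lambda>x. lam * (f (x + s) - f x)) \<le> indicator {0..D} s * modulus \<eta> lam f D"
    proof (cases "s \<in> {0..D}")
      case True
      then have "modular \<eta> (\<lambda>x. lam * (f (x + s) - f x)) \<le> modulus \<eta> lam f D"
        unfolding modulus_def by (intro SUP_upper) auto
      then show ?thesis using True by simp
    qed simp
  qed
  also have "\<dots> = modulus \<eta> lam f D * emeasure lborel {0..D}"
    by (subst mult.commute, rule nn_integral_cmult_indicator) simp
  also have "\<dots> = ennreal D * modulus \<eta> lam f D" using D by (simp add: mult.commute)
  finally show ?thesis .
qed

lemma ind_sum_le1:
  assumes samp: "sampling_sequence t \<delta> \<Delta>" and w: "0 < w"
  shows "AE u in lborel. (\<integral>\<^sup>+k. indicator {t k / w .. t (k + 1) / w} u \<partial>count_space UNIV) \<le> (1::ennreal)"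
proof -
  have "range (\<lambda>k. t k / w) \<in> null_sets lborel" by (rule countable_imp_null_set_lborel) simp
  then have "AE u in lborel. u \<notin> range (\<lambda>k. t k / w)" by (rule AE_not_in)
  then show ?thesis
  proof (rule AE_mp, intro AE_I2 impI)
    fix u assume u: "u \<notin> range (\<lambda>k. t k / w)"
    have uniq: "k = j" if "u \<in> {t k / w .. t (k + 1) / w}" "u \<in> {t j / w .. t (j + 1) / w}" for k j
    proof (rule ccontr)
      assume "k \<noteq> j"
      then consider "k < j" | "j < k" by linarith
      then show False
      proof cases
        case 1
        have "t (k + 1) / w \<le> t j / w" using samp_mono[OF samp 1] w by (simp add: divide_right_mono)
        then have "u = t j / w" using that by auto
        then show False using u by auto
      next
        case 2
        have "t (j + 1) / w \<le> t k / w" using samp_mono[OF samp 2] w by (simp add: divide_right_mono)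
        then have "u = t k / w" using that by auto
        then show False using u by auto
      qed
    qed
    show "(\<integral>\<^sup>+k. indicator {t k / w .. t (k + 1) / w} u \<partial>count_space UNIV) \<le> (1::ennreal)"
    proof (cases "\<exists>j. u \<in> {t j / w .. t (j + 1) / w}")
      case True
      then obtain j where j: "u \<in> {t j / w .. t (j + 1) / w}" by blast
      have "(\<integral>\<^sup>+k. indicator {t k / w .. t (k + 1) / w} u \<partial>count_space UNIV) = (\<Sum>k\<in>{j}. (indicator {t k / w .. t (k + 1) / w} u :: ennreal))"
        by (rule nn_integral_count_space') (use uniq j in \<open>auto split: split_indicator\<close>)
      then show ?thesis by (simp split: split_indicator)
    next
      case False
      then have "\<And>k. (indicator {t k / w .. t (k + 1) / w} u :: ennreal) = 0" by auto
      then show ?thesis by simp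
    qed
  qed
qed

lemma A1_integral:
  fixes f Lb :: "real \<Rightarrow> real"
  assumes eta: "phi_function \<eta>" and samp: "sampling_sequence t \<delta> \<Delta>" and w: "0 < w"
    and fb[measurable]: "f \<in> borel_measurable borel" and Lb[measurable]: "Lb \<in> borel_measurable borel"
  shows "(\<integral>\<^sup>+x. (\<integral>\<^sup>+k. ennreal (Lb (w * x - t k)) * (ennreal (w / (t (k + 1) - t k)) *
            (\<integral>\<^sup>+u. indicator {t k / w .. t (k + 1) / w} u * ennreal (\<eta> \<bar>lam * (f u - f (x + u - t k / w))\<bar>) \<partial>lborel)) \<partial>count_space UNIV) \<partial>lborel)
    \<le> ennreal (w / \<delta>) * (\<integral>\<^sup>+y. ennreal (Lb (w * y)) * modular \<eta> (\<lambda>u. lam * (f (u + y) - f u)) \<partial>lborel)"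
proof -
  note [measurable] = phi_measurable[OF eta]
  have dpos: "0 < \<delta>" using samp_props[OF samp] by auto
  define Phi where "Phi = (\<lambda>u. \<integral>\<^sup>+y. ennreal (Lb (w * y)) * ennreal (\<eta> \<bar>lam * (f u - f (u + y))\<bar>) \<partial>lborel)"
  have Phib[measurable]: "Phi \<in> borel_measurable borel" unfolding Phi_def by measurable
  have step1: "(\<integral>\<^sup>+x. (\<integral>\<^sup>+k. ennreal (Lb (w * x - t k)) * (ennreal (w / (t (k + 1) - t k)) *
            (\<integral>\<^sup>+u. indicator {t k / w .. t (k + 1) / w} u * ennreal (\<eta> \<bar>lam * (f u - f (x + u - t k / w))\<bar>) \<partial>lborel)) \<partial>count_space UNIV) \<partial>lborel)
     = (\<integral>\<^sup>+k. (\<integral>\<^sup>+x. ennreal (Lb (w * x - t k)) * (ennreal (w / (t (k + 1) - t k)) *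
            (\<integral>\<^sup>+u. indicator {t k / w .. t (k + 1) / w} u * ennreal (\<eta> \<bar>lam * (f u - f (x + u - t k / w))\<bar>) \<partial>lborel)) \<partial>lborel) \<partial>count_space UNIV)"
    by (rule nn_integral_count_space_nn_integral) measurable
  have step2: "(\<integral>\<^sup>+x. ennreal (Lb (w * x - t k)) * (ennreal (w / (t (k + 1) - t k)) *
            (\<integral>\<^sup>+u. indicator {t k / w .. t (k + 1) / w} u * ennreal (\<eta> \<bar>lam * (f u - f (x + u - t k / w))\<bar>) \<partial>lborel)) \<partial>lborel)
      \<le> ennreal (w / \<delta>) * (\<integral>\<^sup>+u. indicator {t k / w .. t (k + 1) / w} u * Phi u \<partial>lborel)" for k
  proof -
    define c where "c = t k / w"
    have "(\<integral>\<^sup>+x. ennreal (Lb (w * x - t k)) * (ennreal (w / (t (k + 1) - t k)) *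
            (\<integral>\<^sup>+u. indicator {t k / w .. t (k + 1) / w} u * ennreal (\<eta> \<bar>lam * (f u - f (x + u - t k / w))\<bar>) \<partial>lborel)) \<partial>lborel)
        = (\<integral>\<^sup>+x. ennreal (w / (t (k + 1) - t k)) * (\<integral>\<^sup>+u. ennreal (Lb (w * x - t k)) * (indicator {t k / w .. t (k + 1) / w} u * ennreal (\<eta> \<bar>lam * (f u - f (x + u - c))\<bar>)) \<partial>lborel) \<partial>lborel)"
      by (intro nn_integral_cong) (simp add: nn_integral_cmult c_def mult.left_commute)
    also have "\<dots> = ennreal (w / (t (k + 1) - t k)) * (\<integral>\<^sup>+x. (\<integral>\<^sup>+u. ennreal (Lb (w * x - t k)) * (indicator {t k / w .. t (k + 1) / w} u * ennreal (\<eta> \<bar>lam * (f u - f (x + u - c))\<bar>)) \<partial>lborel) \<partial>lborel)"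
      by (rule nn_integral_cmult) measurable
    also have "(\<integral>\<^sup>+x. (\<integral>\<^sup>+u. ennreal (Lb (w * x - t k)) * (indicator {t k / w .. t (k + 1) / w} u * ennreal (\<eta> \<bar>lam * (f u - f (x + u - c))\<bar>)) \<partial>lborel) \<partial>lborel)
        = (\<integral>\<^sup>+u. (\<integral>\<^sup>+x. ennreal (Lb (w * x - t k)) * (indicator {t k / w .. t (k + 1) / w} u * ennreal (\<eta> \<bar>lam * (f u - f (x + u - c))\<bar>)) \<partial>lborel) \<partial>lborel)"
      by (rule lborel_pair.Fubini'[symmetric]) measurable
    also have "\<dots> = (\<integral>\<^sup>+u. indicator {t k / w .. t (k + 1) / w} u * Phi u \<partial>lborel)"
    proof (intro nn_integral_cong)
      fix u
      have "(\<integral>\<^sup>+x. ennreal (Lb (w * x - t k)) * (indicator {t k / w .. t (k + 1) / w} u * ennreal (\<eta> \<bar>lam * (f u - f (x + u - c))\<bar>)) \<partial>lborel)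
          = indicator {t k / w .. t (k + 1) / w} u * (\<integral>\<^sup>+x. ennreal (Lb (w * x - t k)) * ennreal (\<eta> \<bar>lam * (f u - f (x + u - c))\<bar>) \<partial>lborel)"
        by (subst nn_integral_cmult[symmetric]) (measurable, auto intro!: nn_integral_cong simp: mult.left_commute)
      also have "(\<integral>\<^sup>+x. ennreal (Lb (w * x - t k)) * ennreal (\<eta> \<bar>lam * (f u - f (x + u - c))\<bar>) \<partial>lborel)
          = ennreal \<bar>1\<bar> * (\<integral>\<^sup>+y. ennreal (Lb (w * (c + 1 * y) - t k)) * ennreal (\<eta> \<bar>lam * (f u - f ((c + 1 * y) + u - c))\<bar>) \<partial>lborel)"
        by (rule nn_integral_real_affine[where c=1 and t=c, of "\<lambda>x. ennreal (Lb (w * x - t k)) * ennreal (\<eta> \<bar>lam * (f u - f (x + u - c))\<bar>)"]) measurable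
      also have "\<dots> = Phi u"
      proof -
        have e: "\<And>y. w * (c + 1 * y) - t k = w * y" using w by (simp add: c_def field_simps)
        have e2: "\<And>y. c + 1 * y + u - c = u + y" by simp
        show ?thesis unfolding Phi_def e e2 by simp
      qed
      finally show "(\<integral>\<^sup>+x. ennreal (Lb (w * x - t k)) * (indicator {t k / w .. t (k + 1) / w} u * ennreal (\<eta> \<bar>lam * (f u - f (x + u - c))\<bar>)) \<partial>lborel)
          = indicator {t k / w .. t (k + 1) / w} u * Phi u" .
    qed
    also have "ennreal (w / (t (k + 1) - t k)) * (\<integral>\<^sup>+u. indicator {t k / w .. t (k + 1) / w} u * Phi u \<partial>lborel)
        \<le> ennreal (w / \<delta>) * (\<integral>\<^sup>+u. indicator {t k / w .. t (k + 1) / w} u * Phi u \<partial>lborel)"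
    proof (intro mult_right_mono ennreal_leI)
      have D: "\<delta> \<le> t (k + 1) - t k" using samp_props[OF samp] by auto
      show "w / (t (k + 1) - t k) \<le> w / \<delta>" using D dpos w by (intro frac_le) auto
    qed simp
    finally show ?thesis .
  qed
  have "(\<integral>\<^sup>+k. (\<integral>\<^sup>+x. ennreal (Lb (w * x - t k)) * (ennreal (w / (t (k + 1) - t k)) *
            (\<integral>\<^sup>+u. indicator {t k / w .. t (k + 1) / w} u * ennreal (\<eta> \<bar>lam * (f u - f (x + u - t k / w))\<bar>) \<partial>lborel)) \<partial>lborel) \<partial>count_space UNIV)
      \<le> (\<integral>\<^sup>+k. ennreal (w / \<delta>) * (\<integral>\<^sup>+u. indicator {t k / w .. t (k + 1) / w} u * Phi u \<partial>lborel) \<partial>count_space UNIV)"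
    by (intro nn_integral_mono step2)
  also have "\<dots> = ennreal (w / \<delta>) * (\<integral>\<^sup>+k. (\<integral>\<^sup>+u. indicator {t k / w .. t (k + 1) / w} u * Phi u \<partial>lborel) \<partial>count_space UNIV)"
    by (rule nn_integral_cmult) simp
  also have "(\<integral>\<^sup>+k. (\<integral>\<^sup>+u. indicator {t k / w .. t (k + 1) / w} u * Phi u \<partial>lborel) \<partial>count_space UNIV)
      = (\<integral>\<^sup>+u. (\<integral>\<^sup>+k. indicator {t k / w .. t (k + 1) / w} u * Phi u \<partial>count_space UNIV) \<partial>lborel)"
    by (rule nn_integral_count_space_nn_integral[symmetric]) measurable
  also have "\<dots> = (\<integral>\<^sup>+u. (\<integral>\<^sup>+k. indicator {t k / w .. t (k + 1) / w} u \<partial>count_space UNIV) * Phi u \<partial>lborel)"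
    by (intro nn_integral_cong nn_integral_multc) simp
  also have "\<dots> \<le> (\<integral>\<^sup>+u. Phi u \<partial>lborel)"
  proof (rule nn_integral_mono_AE)
    show "AE u in lborel. (\<integral>\<^sup>+k. indicator {t k / w .. t (k + 1) / w} u \<partial>count_space UNIV) * Phi u \<le> Phi u"
      using ind_sum_le1[OF samp w] by eventually_elim (use mult_right_mono in fastforce)
  qed
  also have "(\<integral>\<^sup>+u. Phi u \<partial>lborel) = (\<integral>\<^sup>+y. ennreal (Lb (w * y)) * modular \<eta> (\<lambda>u. lam * (f (u + y) - f u)) \<partial>lborel)"
  proof -
    have "(\<integral>\<^sup>+u. Phi u \<partial>lborel) = (\<integral>\<^sup>+y. (\<integral>\<^sup>+u. ennreal (Lb (w * y)) * ennreal (\<eta> \<bar>lam * (f u - f (u + y))\<bar>) \<partial>lborel) \<partial>lborel)"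
      unfolding Phi_def by (rule lborel_pair.Fubini') measurable
    also have "\<dots> = (\<integral>\<^sup>+y. ennreal (Lb (w * y)) * modular \<eta> (\<lambda>u. lam * (f (u + y) - f u)) \<partial>lborel)"
    proof (intro nn_integral_cong)
      fix y
      have eq: "\<And>u. \<bar>lam * (f u - f (u + y))\<bar> = \<bar>lam * (f (u + y) - f u)\<bar>" by (simp add: abs_mult abs_minus_commute)
      have "(\<integral>\<^sup>+u. ennreal (Lb (w * y)) * ennreal (\<eta> \<bar>lam * (f u - f (u + y))\<bar>) \<partial>lborel)
          = (\<integral>\<^sup>+u. ennreal (Lb (w * y)) * ennreal (\<eta> \<bar>lam * (f (u + y) - f u)\<bar>) \<partial>lborel)"
        by (simp only: eq)
      also have "\<dots> = ennreal (Lb (w * y)) * (\<integral>\<^sup>+u. ennreal (\<eta> \<bar>lam * (f (u + y) - f u)\<bar>) \<partial>lborel)"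
        by (rule nn_integral_cmult) measurable
      finally show "(\<integral>\<^sup>+u. ennreal (Lb (w * y)) * ennreal (\<eta> \<bar>lam * (f u - f (u + y))\<bar>) \<partial>lborel)
          = ennreal (Lb (w * y)) * modular \<eta> (\<lambda>u. lam * (f (u + y) - f u))"
        unfolding modular_lborel .
    qed
    finally show ?thesis .
  qed
  finally show ?thesis using step1 by (simp add: mult_left_mono)
qed

lemma AE_scale:
  fixes L Lb :: "real \<Rightarrow> real"
  assumes ae: "AE y in lborel. L y = Lb y" and c: "c \<noteq> 0"
  shows "AE y in lborel. L (c * y) = Lb (c * y)"
proof -
  from ae obtain N where N: "{y \<in> space lborel. \<not> L y = Lb y} \<subseteq> N" "emeasure lborel N = 0" "N \<in> sets lborel"
    by (rule AE_E)
  have Nb[measurable]: "N \<in> sets borel" using N(3) by simp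
  have "AE y in lborel. y \<notin> N" using N by (intro AE_not_in) auto
  then have "AE y in lborel. 0 + c * y \<notin> N"
    by (rule AE_borel_affine[OF c, of "\<lambda>y. y \<notin> N" 0, rotated]) measurable
  then show ?thesis by eventually_elim (use N(1) in auto)
qed

lemma half_double: "ennreal (1/2) * (Z + Z) = (Z::ennreal)"
proof -
  have "ennreal (1/2) * (Z + Z) = (ennreal (1/2) * ennreal 2) * Z"
    by (simp add: mult_2[symmetric] mult.assoc)
  also have "ennreal (1/2) * ennreal 2 = ennreal (1/2 * 2)" by (rule ennreal_mult[symmetric]) auto
  also have "ennreal (1/2 * 2) = 1" by simp
  finally show ?thesis by simp
qed

lemma J_le_Z:
  fixes f :: "real \<Rightarrow> real"
  assumes eta: "phi_function \<eta>" "convex_on {0..} \<eta>" and fb[measurable]: "f \<in> borel_measurable borel"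
  shows "modular \<eta> (\<lambda>u. 1/2 * (f (u + y) - f u)) \<le> modular \<eta> f"
proof -
  note [measurable] = phi_measurable[OF eta(1)]
  have pt: "ennreal (\<eta> \<bar>1/2 * (f (u + y) - f u)\<bar>) \<le> ennreal (1/2) * (ennreal (\<eta> \<bar>f (u + y)\<bar>) + ennreal (\<eta> \<bar>f u\<bar>))" for u
  proof -
    have "\<eta> \<bar>1/2 * (f (u + y) - f u)\<bar> \<le> \<eta> ((\<bar>f (u + y)\<bar> + \<bar>f u\<bar>) / 2)"
      by (rule phi_mono[OF eta(1)]) auto
    also have "\<dots> \<le> (\<eta> \<bar>f (u + y)\<bar> + \<eta> \<bar>f u\<bar>) / 2" by (rule convex2[OF eta]) auto
    finally have "ennreal (\<eta> \<bar>1/2 * (f (u + y) - f u)\<bar>) \<le> ennreal (1/2 * (\<eta> \<bar>f (u + y)\<bar> + \<eta> \<bar>f u\<bar>))"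
      by (intro ennreal_leI) simp
    also have "\<dots> = ennreal (1/2) * ennreal (\<eta> \<bar>f (u + y)\<bar> + \<eta> \<bar>f u\<bar>)"
      by (rule ennreal_mult) (use phi_nonneg[OF eta(1)] in auto)
    also have "ennreal (\<eta> \<bar>f (u + y)\<bar> + \<eta> \<bar>f u\<bar>) = ennreal (\<eta> \<bar>f (u + y)\<bar>) + ennreal (\<eta> \<bar>f u\<bar>)"
      by (rule ennreal_plus) (use phi_nonneg[OF eta(1)] in auto)
    finally show ?thesis .
  qed
  have tr: "(\<integral>\<^sup>+u. ennreal (\<eta> \<bar>f (u + y)\<bar>) \<partial>lborel) = (\<integral>\<^sup>+u. ennreal (\<eta> \<bar>f u\<bar>) \<partial>lborel)"
  proof -
    have "(\<integral>\<^sup>+u. ennreal (\<eta> \<bar>f u\<bar>) \<partial>lborel) = ennreal \<bar>1\<bar> * (\<integral>\<^sup>+u. ennreal (\<eta> \<bar>f (y + 1 * u)\<bar>) \<partial>lborel)"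
      by (rule nn_integral_real_affine[where c=1 and t=y, of "\<lambda>u. ennreal (\<eta> \<bar>f u\<bar>)"]) measurable
    then show ?thesis by (simp add: add.commute)
  qed
  have "modular \<eta> (\<lambda>u. 1/2 * (f (u + y) - f u)) \<le> (\<integral>\<^sup>+u. ennreal (1/2) * (ennreal (\<eta> \<bar>f (u + y)\<bar>) + ennreal (\<eta> \<bar>f u\<bar>)) \<partial>lborel)"
    unfolding modular_lborel by (intro nn_integral_mono pt)
  also have "\<dots> = ennreal (1/2) * ((\<integral>\<^sup>+u. ennreal (\<eta> \<bar>f (u + y)\<bar>) \<partial>lborel) + (\<integral>\<^sup>+u. ennreal (\<eta> \<bar>f u\<bar>) \<partial>lborel))"
  proof -
    have "(\<integral>\<^sup>+u. ennreal (1/2) * (ennreal (\<eta> \<bar>f (u + y)\<bar>) + ennreal (\<eta> \<bar>f u\<bar>)) \<partial>lborel)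
       = ennreal (1/2) * (\<integral>\<^sup>+u. (ennreal (\<eta> \<bar>f (u + y)\<bar>) + ennreal (\<eta> \<bar>f u\<bar>)) \<partial>lborel)"
      by (rule nn_integral_cmult) measurable
    also have "(\<integral>\<^sup>+u. (ennreal (\<eta> \<bar>f (u + y)\<bar>) + ennreal (\<eta> \<bar>f u\<bar>)) \<partial>lborel)
       = (\<integral>\<^sup>+u. ennreal (\<eta> \<bar>f (u + y)\<bar>) \<partial>lborel) + (\<integral>\<^sup>+u. ennreal (\<eta> \<bar>f u\<bar>) \<partial>lborel)"
      by (rule nn_integral_add) measurable
    finally show ?thesis .
  qed
  also have "\<dots> = modular \<eta> f" unfolding tr modular_lborel
    by (rule half_double)
  finally show ?thesis .
qed

lemma Y_bound:
  fixes f L Lb :: "real \<Rightarrow> real"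
  assumes eta: "phi_function \<eta>" "convex_on {0..} \<eta>" and fb[measurable]: "f \<in> borel_measurable borel"
    and Lb[measurable]: "Lb \<in> borel_measurable borel" and ae: "AE y in lborel. L y = Lb y"
    and Lnn: "\<And>x. 0 \<le> L x" and Lint: "integrable lebesgue L" and w: "0 < w" and d: "0 < d"
    and tailw: "w * (LINT y:{y. \<bar>y\<bar> > d}|lebesgue. L (w * y)) \<le> M"
  shows "(\<integral>\<^sup>+y. ennreal (Lb (w * y)) * modular \<eta> (\<lambda>u. 1/2 * (f (u + y) - f u)) \<partial>lborel)
    \<le> modulus \<eta> (1/2) f d * (ennreal (1 / w) * ennreal (LINT x|lebesgue. L x)) + modular \<eta> f * ennreal (M / w)"
proof -
  note [measurable] = phi_measurable[OF eta(1)]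
  define \<omega> where "\<omega> = modulus \<eta> (1/2) f d"
  define Z where "Z = modular \<eta> f"
  define A where "A = {y::real. \<bar>y\<bar> > d}"
  have Ab[measurable]: "A \<in> sets borel" unfolding A_def by measurable
  have pt: "ennreal (Lb (w * y)) * modular \<eta> (\<lambda>u. 1/2 * (f (u + y) - f u))
      \<le> \<omega> * (ennreal (Lb (w * y)) * indicator (-A) y) + Z * (ennreal (Lb (w * y)) * indicator A y)" for y
  proof (cases "y \<in> A")
    case True
    have "ennreal (Lb (w * y)) * modular \<eta> (\<lambda>u. 1/2 * (f (u + y) - f u)) \<le> ennreal (Lb (w * y)) * Z"
      unfolding Z_def by (intro mult_left_mono J_le_Z[OF eta fb]) auto
    then show ?thesis using True by (simp add: mult.commute)
  next
    case False
    have "modular \<eta> (\<lambda>u. 1/2 * (f (u + y) - f u)) \<le> \<omega>"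
      unfolding \<omega>_def modulus_def using False by (intro SUP_upper) (auto simp: A_def)
    then have "ennreal (Lb (w * y)) * modular \<eta> (\<lambda>u. 1/2 * (f (u + y) - f u)) \<le> ennreal (Lb (w * y)) * \<omega>"
      by (intro mult_left_mono) auto
    then show ?thesis using False by (simp add: mult.commute)
  qed
  have "(\<integral>\<^sup>+y. ennreal (Lb (w * y)) * modular \<eta> (\<lambda>u. 1/2 * (f (u + y) - f u)) \<partial>lborel)
      \<le> (\<integral>\<^sup>+y. \<omega> * (ennreal (Lb (w * y)) * indicator (-A) y) + Z * (ennreal (Lb (w * y)) * indicator A y) \<partial>lborel)"
    by (intro nn_integral_mono pt)
  also have "\<dots> = \<omega> * (\<integral>\<^sup>+y. ennreal (Lb (w * y)) * indicator (-A) y \<partial>lborel) + Z * (\<integral>\<^sup>+y. ennreal (Lb (w * y)) * indicator A y \<partial>lborel)"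
    by (subst nn_integral_add) (measurable, simp add: nn_integral_cmult)
  also have "\<dots> \<le> \<omega> * (ennreal (1 / w) * ennreal (LINT x|lebesgue. L x)) + Z * ennreal (M / w)"
  proof (intro add_mono mult_left_mono)
    have "(\<integral>\<^sup>+y. ennreal (Lb (w * y)) * indicator (-A) y \<partial>lborel) \<le> (\<integral>\<^sup>+y. ennreal (Lb (0 + w * y)) \<partial>lborel)"
      by (intro nn_integral_mono) (auto split: split_indicator)
    also have "\<dots> = ennreal (1 / w) * (\<integral>\<^sup>+x. ennreal (Lb x) \<partial>lborel)"
    proof -
      have "(\<integral>\<^sup>+x. ennreal (Lb x) \<partial>lborel) = ennreal \<bar>w\<bar> * (\<integral>\<^sup>+y. ennreal (Lb (0 + w * y)) \<partial>lborel)"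
        by (rule nn_integral_real_affine) (use w in auto)
      then have "ennreal (1 / w) * (\<integral>\<^sup>+x. ennreal (Lb x) \<partial>lborel) = (ennreal (1 / w) * ennreal w) * (\<integral>\<^sup>+y. ennreal (Lb (0 + w * y)) \<partial>lborel)"
        using w by (simp add: mult.assoc)
      also have "ennreal (1 / w) * ennreal w = 1" using w by (simp flip: ennreal_mult)
      finally show ?thesis by simp
    qed
    also have "(\<integral>\<^sup>+x. ennreal (Lb x) \<partial>lborel) = ennreal (LINT x|lebesgue. L x)"
    proof -
      have "(\<integral>\<^sup>+x. ennreal (Lb x) \<partial>lborel) = (\<integral>\<^sup>+x. ennreal (L x) \<partial>lborel)"
        using ae by (intro nn_integral_cong_AE) auto
      also have "\<dots> = (\<integral>\<^sup>+x. ennreal (L x) \<partial>lebesgue)" by (simp add: nn_integral_completion)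
      also have "\<dots> = ennreal (LINT x|lebesgue. L x)" by (rule nn_integral_eq_integral[OF Lint]) (use Lnn in auto)
      finally show ?thesis .
    qed
    finally show "(\<integral>\<^sup>+y. ennreal (Lb (w * y)) * indicator (-A) y \<partial>lborel) \<le> ennreal (1 / w) * ennreal (LINT x|lebesgue. L x)" .
  next
    have ae2: "AE y in lborel. L (w * y) = Lb (w * y)" by (rule AE_scale[OF ae]) (use w in auto)
    have iLb: "integrable lborel Lb"
    proof -
      have Lbl: "Lb \<in> borel_measurable lebesgue" by (rule measurable_completion) simp
      have Lm: "L \<in> borel_measurable lebesgue" using Lint by auto
      have "integrable lebesgue Lb" using Lint
        by (subst integrable_cong_AE[where g=L, OF Lbl Lm]) (use ae in \<open>auto intro: AE_completion simp: eq_commute\<close>)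
      then show ?thesis by (simp add: integrable_completion)
    qed
    have i1: "integrable lborel (\<lambda>y. indicator A y * Lb (0 + w * y))"
      using integrable_mult_indicator[OF _ lborel_integrable_real_affine[OF iLb, of w 0]] w by simp
    have i2: "integrable lebesgue (\<lambda>y. indicator A y * L (w * y))"
    proof -
      have il: "integrable lebesgue (\<lambda>y. indicator A y * Lb (w * y))" using i1 by (simp add: integrable_completion)
      have aeq: "AE y in lebesgue. indicator A y * Lb (w * y) = indicator A y * L (w * y)"
        using ae2 by (intro AE_completion) auto
      have m1: "(\<lambda>y. indicator A y * Lb (w * y)) \<in> borel_measurable lebesgue"
        by (rule measurable_completion) simp
      have "(\<lambda>y. L (w * y)) \<in> borel_measurable lebesgue"
      proof -
        have Lm: "L \<in> borel_measurable lebesgue" using Lint by auto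
        have "(\<lambda>y. w *\<^sub>R y) \<in> lebesgue \<rightarrow>\<^sub>M lebesgue" by (rule lebesgue_measurable_scaling)
        from measurable_compose[OF this Lm] show ?thesis by simp
      qed
      then have m2: "(\<lambda>y. indicator A y * L (w * y)) \<in> borel_measurable lebesgue"
        using Ab by (intro borel_measurable_times borel_measurable_indicator) (auto intro: measurable_completion)
      show ?thesis using il integrable_cong_AE[OF m1 m2 aeq] by simp
    qed
    have "(\<integral>\<^sup>+y. ennreal (Lb (w * y)) * indicator A y \<partial>lborel) = (\<integral>\<^sup>+y. ennreal (indicator A y * L (w * y)) \<partial>lborel)"
      using ae2 by (intro nn_integral_cong_AE) (auto split: split_indicator)
    also have "\<dots> = (\<integral>\<^sup>+y. ennreal (indicator A y * L (w * y)) \<partial>lebesgue)" by (simp add: nn_integral_completion)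
    also have "\<dots> = ennreal (LINT y:A|lebesgue. L (w * y))"
      unfolding set_lebesgue_integral_def
      by (subst nn_integral_eq_integral[OF i2]) (use Lnn in \<open>auto simp: indicator_def\<close>)
    also have "\<dots> \<le> ennreal (M / w)"
      using tailw w by (intro ennreal_leI) (simp add: A_def field_simps)
    finally show "(\<integral>\<^sup>+y. ennreal (Lb (w * y)) * indicator A y \<partial>lborel) \<le> ennreal (M / w)" .
  qed auto
  finally show ?thesis unfolding \<omega>_def Z_def .
qed

lemma meas_count:
  fixes g :: "int \<Rightarrow> 'a \<Rightarrow> ennreal"
  assumes g: "\<And>k. g k \<in> borel_measurable M"
  shows "(\<lambda>x. \<integral>\<^sup>+k. g k x \<partial>count_space UNIV) \<in> borel_measurable M"
proof -
  interpret S: sigma_finite_measure "count_space (UNIV::int set)"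
    by (rule sigma_finite_measure_count_space_countable) simp
  have "(\<lambda>(k, x). g k x) \<in> borel_measurable (count_space UNIV \<Otimes>\<^sub>M M)"
    by (rule measurable_pair_measure_countable1) (use g in auto)
  then have "(\<lambda>(x, k). g k x) \<in> borel_measurable (M \<Otimes>\<^sub>M count_space UNIV)"
    using measurable_pair_swap_iff[of "\<lambda>(k, x). g k x"] by (simp add: case_prod_beta')
  then show ?thesis using S.borel_measurable_nn_integral[where f="\<lambda>x k. g k x" and N=M] by simp
qed

lemma AE_affine:
  fixes L Lb :: "real \<Rightarrow> real"
  assumes ae: "AE y in lborel. L y = Lb y" and c: "c \<noteq> 0"
  shows "AE y in lborel. L (b + c * y) = Lb (b + c * y)"
proof -
  from ae obtain N where N: "{y \<in> space lborel. \<not> L y = Lb y} \<subseteq> N" "emeasure lborel N = 0" "N \<in> sets lborel"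
    by (rule AE_E)
  have Nb[measurable]: "N \<in> sets borel" using N(3) by simp
  have "AE y in lborel. y \<notin> N" using N by (intro AE_not_in) auto
  then have "AE y in lborel. b + c * y \<notin> N"
    by (rule AE_borel_affine[OF c, of "\<lambda>y. y \<notin> N" b, rotated]) measurable
  then show ?thesis by eventually_elim (use N(1) in auto)
qed

lemma g5: "0 \<le> a \<Longrightarrow> 0 \<le> b \<Longrightarrow> 0 \<le> c \<Longrightarrow> 0 \<le> d \<Longrightarrow> 0 \<le> e \<Longrightarrow>
  ennreal a * (ennreal b * (ennreal c * (X * (ennreal d * ennreal e)))) = ennreal (a * b * c * d * e) * X"
  by (simp add: ennreal_mult mult_nonneg_nonneg ac_simps)

lemma g4: "0 \<le> a \<Longrightarrow> 0 \<le> b \<Longrightarrow> 0 \<le> c \<Longrightarrow> 0 \<le> d \<Longrightarrow>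
  ennreal a * (ennreal b * (ennreal c * (X * ennreal d))) = ennreal (a * b * c * d) * X"
  by (simp add: ennreal_mult mult_nonneg_nonneg ac_simps)

lemma g3: "0 \<le> a \<Longrightarrow> 0 \<le> b \<Longrightarrow> 0 \<le> c \<Longrightarrow>
  ennreal a * (ennreal b * (ennreal c * X)) = ennreal (a * b * c) * X"
  by (simp add: ennreal_mult mult_nonneg_nonneg ac_simps)

lemma final_alg:
  assumes "0 < w" "0 < \<delta>" "0 < m" "0 \<le> N" "0 \<le> M1" "0 \<le> \<Delta>"
  shows "ennreal (1/3) * (ennreal (1/m) * (ennreal (w/\<delta>) * (\<omega>1 * (ennreal (1/w) * ennreal N) + Z * ennreal (M1 * w powr (-\<alpha>0) / w)))
      + ennreal (w/\<delta>) * (ennreal (\<Delta>/w) * \<omega>2) + ennreal (w powr (-\<theta>0)) * \<Phi>)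
    = ennreal (N / (3 * \<delta> * m)) * \<omega>1 + ennreal (M1 / (3 * \<delta> * m)) * Z * ennreal (w powr (-\<alpha>0))
      + ennreal (\<Delta> / (3 * \<delta>)) * \<omega>2 + ennreal (1/3) * \<Phi> * ennreal (w powr (-\<theta>0))"
proof -
  have e1: "ennreal (1/3) * (ennreal (1/m) * (ennreal (w/\<delta>) * (\<omega>1 * (ennreal (1/w) * ennreal N)))) = ennreal (N / (3 * \<delta> * m)) * \<omega>1"
  proof -
    have "ennreal (1/3) * (ennreal (1/m) * (ennreal (w/\<delta>) * (\<omega>1 * (ennreal (1/w) * ennreal N)))) = ennreal (1/3 * (1/m) * (w/\<delta>) * (1/w) * N) * \<omega>1"
      by (rule g5) (use assms in auto)
    also have "1/3 * (1/m) * (w/\<delta>) * (1/w) * N = N / (3 * \<delta> * m)" using assms by (simp add: field_simps)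
    finally show ?thesis .
  qed
  have e2: "ennreal (1/3) * (ennreal (1/m) * (ennreal (w/\<delta>) * (Z * ennreal (M1 * w powr (-\<alpha>0) / w)))) = ennreal (M1 / (3 * \<delta> * m)) * Z * ennreal (w powr (-\<alpha>0))"
  proof -
    have "ennreal (1/3) * (ennreal (1/m) * (ennreal (w/\<delta>) * (Z * ennreal (M1 * w powr (-\<alpha>0) / w)))) = ennreal (1/3 * (1/m) * (w/\<delta>) * (M1 * w powr (-\<alpha>0) / w)) * Z"
      by (rule g4) (use assms in auto)
    also have "1/3 * (1/m) * (w/\<delta>) * (M1 * w powr (-\<alpha>0) / w) = (M1 / (3 * \<delta> * m)) * w powr (-\<alpha>0)" using assms by (simp add: field_simps)
    also have "ennreal ((M1 / (3 * \<delta> * m)) * w powr (-\<alpha>0)) = ennreal (M1 / (3 * \<delta> * m)) * ennreal (w powr (-\<alpha>0))"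
      by (rule ennreal_mult) (use assms in auto)
    finally show ?thesis by (simp add: ac_simps)
  qed
  have e3: "ennreal (1/3) * (ennreal (w/\<delta>) * (ennreal (\<Delta>/w) * \<omega>2)) = ennreal (\<Delta> / (3 * \<delta>)) * \<omega>2"
  proof -
    have "ennreal (1/3) * (ennreal (w/\<delta>) * (ennreal (\<Delta>/w) * \<omega>2)) = ennreal (1/3 * (w/\<delta>) * (\<Delta>/w)) * \<omega>2"
      by (rule g3) (use assms in auto)
    also have "1/3 * (w/\<delta>) * (\<Delta>/w) = \<Delta> / (3 * \<delta>)" using assms by (simp add: field_simps)
    finally show ?thesis .
  qed
  show ?thesis
    unfolding distrib_left e1[symmetric] e2[symmetric] e3[symmetric] by (simp add: ac_simps)
qed

lemma main_borel:
  fixes t :: "int \<Rightarrow> real" and \<delta> \<Delta> :: real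
    and chi :: "real \<Rightarrow> real \<Rightarrow> real" and L \<psi> \<phi> \<eta> f :: "real \<Rightarrow> real"
    and \<theta>\<^sub>0 \<alpha> M\<^sub>1 \<alpha>\<^sub>0 :: real
  assumes samp: "sampling_sequence t \<delta> \<Delta>"
    and chi1: "kernel_chi1 t chi" and chi2: "kernel_chi2 chi"
    and chi3: "kernel_chi3 chi L \<psi>" and chi4: "kernel_chi4 t chi \<theta>\<^sub>0"
    and L1: "cond_L1 L" and L2: "cond_L2 t L"
    and phi: "phi_function \<phi>" and phi_convex: "convex_on {0..} \<phi>"
    and eta: "phi_function \<eta>" and eta_convex: "convex_on {0..} \<eta>"
    and H: "cond_H \<phi> \<eta> \<psi>"
    and f: "f \<in> orlicz (\<lambda>u. \<phi> u + \<eta> u)"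
    and fb[measurable]: "f \<in> borel_measurable borel"
    and alpha: "0 < \<alpha>" "\<alpha> < 1"
    and M1: "M\<^sub>1 > 0" and alpha0: "\<alpha>\<^sub>0 > 0"
    and tail: "\<exists>W. \<forall>w\<ge>W. w * (LINT y:{y. \<bar>y\<bar> > 1 / w powr \<alpha>}|lebesgue. L (w * y))
                          \<le> M\<^sub>1 * w powr (- \<alpha>\<^sub>0)"
  shows "\<exists>\<mu>>0. \<exists>lam\<^sub>0>0. \<exists>lam>0. \<exists>W. \<forall>w\<ge>W.
    modular \<phi> (\<lambda>x. \<mu> * (sampling_kantorovich t chi w f x - f x))
      \<le> ennreal ((LINT x|lebesgue. L x) / (3 * \<delta> * m0 t L)) * modulus \<eta> lam f (1 / w powr \<alpha>)
       + ennreal (M\<^sub>1 / (3 * \<delta> * m0 t L)) * modular \<eta> (\<lambda>x. lam\<^sub>0 * f x) * ennreal (w powr (- \<alpha>\<^sub>0))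
       + ennreal (\<Delta> / (3 * \<delta>)) * modulus \<eta> lam f (\<Delta> / w)
       + ennreal (1 / 3) * modular \<phi> (\<lambda>x. lam\<^sub>0 * f x) * ennreal (w powr (- \<theta>\<^sub>0))"
proof -
  note [measurable] = phi_measurable[OF eta] phi_measurable[OF phi]
  have Lnn: "\<And>x. 0 \<le> L x" using chi3 unfolding kernel_chi3_def by blast
  have c3: "\<And>x u v. \<bar>chi x u - chi x v\<bar> \<le> L x * \<psi> \<bar>u - v\<bar>" using chi3 unfolding kernel_chi3_def by blast
  have Lleb: "L \<in> borel_measurable lebesgue" using chi3 unfolding kernel_chi3_def by blast
  have psi: "phi_function \<psi>" using chi3 unfolding kernel_chi3_def by blast
  have Lint: "integrable lebesgue L" using L1 unfolding cond_L1_def by auto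
  define m where "m = m0 t L"
  have m: "0 < m" unfolding m_def by (rule m0_pos[OF samp chi3 L1 L2 chi4 chi2])
  have dpos: "0 < \<delta>" and Dpos: "0 < \<Delta>" using samp_props[OF samp] by auto
  obtain Cs where Cs: "0 < Cs" "Cs < 1" and CsH: "\<And>u. 0 \<le> u \<Longrightarrow> \<phi> (Cs * \<psi> u) \<le> \<eta> (1/2 * u)"
  proof -
    have Hs: "\<forall>lam. 0 < lam \<and> lam < 1 \<longrightarrow> (\<exists>C. 0 < C \<and> C < 1 \<and> (\<forall>u\<ge>0. \<phi> (C * \<psi> u) \<le> \<eta> (lam * u)))"
      using H unfolding cond_H_def by blast
    have "\<exists>C. 0 < C \<and> C < 1 \<and> (\<forall>u\<ge>0. \<phi> (C * \<psi> u) \<le> \<eta> (1/2 * u))"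
      using Hs[rule_format, of "1/2"] by simp
    then show ?thesis using that by blast
  qed
  obtain C4 W4 where th: "\<theta>\<^sub>0 > 0" and C4: "\<And>w x u. w \<ge> W4 \<Longrightarrow> u \<noteq> 0 \<Longrightarrow>
      \<bar>(1 / u) * (\<Sum>\<^sub>\<infinity>k. chi (w * x - t k) u) - 1\<bar> \<le> C4 * w powr (- \<theta>\<^sub>0)"
    using chi4 unfolding kernel_chi4_def by blast
  obtain Wt where Wt: "\<And>w. w \<ge> Wt \<Longrightarrow> w * (LINT y:{y. \<bar>y\<bar> > 1 / w powr \<alpha>}|lebesgue. L (w * y)) \<le> M\<^sub>1 * w powr (- \<alpha>\<^sub>0)"
    using tail by blast
  obtain Lb where Lb[measurable]: "Lb \<in> borel_measurable borel" and Lbae: "AE x in lborel. L x = Lb x"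
    using completion_ex_borel_measurable_real[OF Lleb] by (auto simp: eq_commute)
  have fi: "\<And>a b. integrable lborel (\<lambda>u. indicator {a..b} u * f u)"
    by (rule loc_int[OF phi phi_convex eta fb f])
  define C' where "C' = max C4 1"
  have C': "C4 \<le> C'" "1 \<le> C'" unfolding C'_def by auto
  define \<mu> where "\<mu> = min (Cs / (3 * m)) (1 / (3 * C'))"
  have mu: "0 < \<mu>" unfolding \<mu>_def using Cs m C' by auto
  have mu1: "3 * \<mu> * m \<le> Cs"
  proof -
    have "\<mu> \<le> Cs / (3 * m)" unfolding \<mu>_def by simp
    then show ?thesis using m by (simp add: field_simps)
  qed
  have mu2: "3 * \<mu> * C' \<le> 1"
  proof -
    have "\<mu> \<le> 1 / (3 * C')" unfolding \<mu>_def by simp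
    then show ?thesis using C' by (simp add: field_simps)
  qed
  have H': "\<phi> (3 * \<mu> * m0 t L * \<psi> v) \<le> \<eta> (1/2 * v)" if v: "0 \<le> v" for v
  proof -
    have "\<phi> (3 * \<mu> * m0 t L * \<psi> v) \<le> \<phi> (Cs * \<psi> v)"
      using mu1 mu m phi_nonneg[OF psi v] unfolding m_def[symmetric]
      by (intro phi_mono[OF phi]) (auto intro: mult_right_mono)
    also have "\<dots> \<le> \<eta> (1/2 * v)" by (rule CsH[OF v])
    finally show ?thesis .
  qed
  define W where "W = max (max W4 Wt) 1"
  show ?thesis
  proof (rule exI[of _ \<mu>], rule conjI[OF mu], rule exI[of _ "1::real"], rule conjI, simp,
         rule exI[of _ "1/2::real"], rule conjI, simp, rule exI[of _ W], intro allI impI)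
    fix w :: real assume wW: "W \<le> w"
    have w1: "1 \<le> w" and w4: "W4 \<le> w" and wt: "Wt \<le> w" using wW unfolding W_def by auto
    have w: "0 < w" using w1 by simp
    define d where "d = 1 / w powr \<alpha>"
    have d: "0 < d" unfolding d_def using w by simp
    define K where "K = (\<lambda>x. \<integral>\<^sup>+s. indicator {0..\<Delta> / w} s * ennreal (\<eta> \<bar>1/2 * (f (x + s) - f x)\<bar>) \<partial>lborel)"
    define A1 where "A1 = (\<lambda>x. \<integral>\<^sup>+k. ennreal (L (w * x - t k)) * (ennreal (w / (t (k + 1) - t k)) *
            (\<integral>\<^sup>+u. indicator {t k / w .. t (k + 1) / w} u * ennreal (\<eta> \<bar>1/2 * (f u - f (x + u - t k / w))\<bar>) \<partial>lborel)) \<partial>count_space UNIV)"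
    define A1' where "A1' = (\<lambda>x. \<integral>\<^sup>+k. ennreal (Lb (w * x - t k)) * (ennreal (w / (t (k + 1) - t k)) *
            (\<integral>\<^sup>+u. indicator {t k / w .. t (k + 1) / w} u * ennreal (\<eta> \<bar>1/2 * (f u - f (x + u - t k / w))\<bar>) \<partial>lborel)) \<partial>count_space UNIV)"
    define R where "R = (\<lambda>x. ennreal (w powr (- \<theta>\<^sub>0)) * ennreal (\<phi> \<bar>f x\<bar>))"
    have wth: "w powr (- \<theta>\<^sub>0) \<le> 1" using w1 th by (simp add: powr_minus_divide ge_one_powr_ge_zero)
    have wth0: "0 \<le> w powr (- \<theta>\<^sub>0)" by simp
    have P: "ennreal (\<phi> \<bar>\<mu> * (sampling_kantorovich t chi w f x - f x)\<bar>)
        \<le> ennreal (1/3) * (ennreal (1 / m) * A1 x + ennreal (w / \<delta>) * K x + R x)" for x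
    proof -
      define R0 where "R0 = C' * w powr (- \<theta>\<^sub>0) * \<bar>f x\<bar>"
      have R0: "0 \<le> R0" unfolding R0_def using C' by simp
      have T: "\<bar>infsum (\<lambda>k. chi (w * x - t k) (f x)) UNIV - f x\<bar> \<le> R0"
      proof (cases "f x = 0")
        case True
        have "\<And>k. chi (w * x - t k) (f x) = 0" using chi2 True unfolding kernel_chi2_def by auto
        then show ?thesis using True R0 by simp
      next
        case False
        have "\<bar>(1 / f x) * (\<Sum>\<^sub>\<infinity>k. chi (w * x - t k) (f x)) - 1\<bar> \<le> C4 * w powr (- \<theta>\<^sub>0)"
          by (rule C4[OF w4 False])
        also have "\<dots> \<le> C' * w powr (- \<theta>\<^sub>0)" using C' by (intro mult_right_mono) auto
        finally have a: "\<bar>(1 / f x) * (\<Sum>\<^sub>\<infinity>k. chi (w * x - t k) (f x)) - 1\<bar> \<le> C' * w powr (- \<theta>\<^sub>0)" .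
        have "\<bar>infsum (\<lambda>k. chi (w * x - t k) (f x)) UNIV - f x\<bar> = \<bar>f x\<bar> * \<bar>(1 / f x) * (\<Sum>\<^sub>\<infinity>k. chi (w * x - t k) (f x)) - 1\<bar>"
          using False by (simp add: abs_mult[symmetric] field_simps)
        also have "\<dots> \<le> \<bar>f x\<bar> * (C' * w powr (- \<theta>\<^sub>0))" by (intro mult_left_mono a) simp
        finally show ?thesis unfolding R0_def by (simp add: ac_simps)
      qed
      have pw: "ennreal (\<phi> (\<mu> * \<bar>sampling_kantorovich t chi w f x - f x\<bar>))
        \<le> ennreal (1/3) * (ennreal (1 / m0 t L) * A1 x
            + ennreal (1 / m0 t L) * (\<integral>\<^sup>+k. ennreal (L (w * x - t k)) * (ennreal (w / (t (k + 1) - t k)) *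
            (\<integral>\<^sup>+u. indicator {t k / w .. t (k + 1) / w} u * ennreal (\<eta> \<bar>1/2 * (f (x + u - t k / w) - f x)\<bar>) \<partial>lborel)) \<partial>count_space UNIV)
            + ennreal (\<phi> (3 * \<mu> * R0)))"
        unfolding A1_def
        by (rule pw_concrete[OF phi phi_convex psi eta eta_convex samp chi3 L1 L2 chi1 m[unfolded m_def] w fb fi _ mu H' T]) auto
      have sumL: "nsum (\<lambda>k. L (w * x - t k)) \<le> ennreal m"
      proof -
        have "nsum (\<lambda>k. L (w * x - t k)) = ennreal (infsum (\<lambda>k. L (w * x - t k)) UNIV)"
          by (rule nsum_of_summable[OF Lnn m0_props(1)[OF samp chi3 L1 L2]])
        also have "\<dots> \<le> ennreal m" unfolding m_def by (intro ennreal_leI m0_props(2)[OF samp chi3 L1 L2])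
        finally show ?thesis .
      qed
      have a2: "ennreal (1 / m) * (\<integral>\<^sup>+k. ennreal (L (w * x - t k)) * (ennreal (w / (t (k + 1) - t k)) *
            (\<integral>\<^sup>+u. indicator {t k / w .. t (k + 1) / w} u * ennreal (\<eta> \<bar>1/2 * (f (x + u - t k / w) - f x)\<bar>) \<partial>lborel)) \<partial>count_space UNIV)
          \<le> ennreal (w / \<delta>) * K x"
        unfolding K_def by (rule A2_pointwise[OF eta samp w Lnn sumL m fb])
      have r: "ennreal (\<phi> (3 * \<mu> * R0)) \<le> R x"
      proof -
        have "\<phi> (3 * \<mu> * R0) \<le> \<phi> (w powr (- \<theta>\<^sub>0) * \<bar>f x\<bar>)"
        proof (rule phi_mono[OF phi])
          show "0 \<le> 3 * \<mu> * R0" using mu R0 by simp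
          have "3 * \<mu> * R0 = (3 * \<mu> * C') * (w powr (- \<theta>\<^sub>0) * \<bar>f x\<bar>)" unfolding R0_def by (simp add: ac_simps)
          also have "\<dots> \<le> 1 * (w powr (- \<theta>\<^sub>0) * \<bar>f x\<bar>)" by (intro mult_right_mono mu2) simp
          finally show "3 * \<mu> * R0 \<le> w powr (- \<theta>\<^sub>0) * \<bar>f x\<bar>" by simp
        qed
        also have "\<dots> \<le> w powr (- \<theta>\<^sub>0) * \<phi> \<bar>f x\<bar>"
          by (rule convex_scale[OF phi_convex phi_zero[OF phi] wth0 wth]) simp
        finally show ?thesis unfolding R_def
          using wth0 phi_nonneg[OF phi] by (simp add: ennreal_mult[symmetric] ennreal_leI)
      qed
      have "\<bar>\<mu> * (sampling_kantorovich t chi w f x - f x)\<bar> = \<mu> * \<bar>sampling_kantorovich t chi w f x - f x\<bar>"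
        using mu by (simp add: abs_mult)
      then have "ennreal (\<phi> \<bar>\<mu> * (sampling_kantorovich t chi w f x - f x)\<bar>)
        \<le> ennreal (1/3) * (ennreal (1 / m0 t L) * A1 x
            + ennreal (1 / m0 t L) * (\<integral>\<^sup>+k. ennreal (L (w * x - t k)) * (ennreal (w / (t (k + 1) - t k)) *
            (\<integral>\<^sup>+u. indicator {t k / w .. t (k + 1) / w} u * ennreal (\<eta> \<bar>1/2 * (f (x + u - t k / w) - f x)\<bar>) \<partial>lborel)) \<partial>count_space UNIV)
            + ennreal (\<phi> (3 * \<mu> * R0)))" using pw by simp
      also have "\<dots> \<le> ennreal (1/3) * (ennreal (1 / m) * A1 x + ennreal (w / \<delta>) * K x + R x)"
        unfolding m_def[symmetric] by (intro mult_left_mono add_mono order.refl a2 r) simp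
      finally show ?thesis .
    qed
    have AE1: "AE x in lborel. A1 x = A1' x"
    proof -
      have "AE x in lborel. \<forall>k. L (w * x - t k) = Lb (w * x - t k)"
      proof (subst AE_all_countable, intro allI)
        fix k
        have "AE x in lborel. L ((- t k) + w * x) = Lb ((- t k) + w * x)" by (rule AE_affine[OF Lbae]) (use w in auto)
        then show "AE x in lborel. L (w * x - t k) = Lb (w * x - t k)" by (simp add: algebra_simps)
      qed
      then show ?thesis unfolding A1_def A1'_def by eventually_elim simp
    qed
    show "modular \<phi> (\<lambda>x. \<mu> * (sampling_kantorovich t chi w f x - f x))
      \<le> ennreal ((LINT x|lebesgue. L x) / (3 * \<delta> * m0 t L)) * modulus \<eta> (1/2) f (1 / w powr \<alpha>)
       + ennreal (M\<^sub>1 / (3 * \<delta> * m0 t L)) * modular \<eta> (\<lambda>x. 1 * f x) * ennreal (w powr (- \<alpha>\<^sub>0))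
       + ennreal (\<Delta> / (3 * \<delta>)) * modulus \<eta> (1/2) f (\<Delta> / w)
       + ennreal (1 / 3) * modular \<phi> (\<lambda>x. 1 * f x) * ennreal (w powr (- \<theta>\<^sub>0))"
    proof -
      have mA1'[measurable]: "A1' \<in> borel_measurable borel" unfolding A1'_def by (rule meas_count) measurable
      have mK[measurable]: "K \<in> borel_measurable borel" unfolding K_def by measurable
      define N where "N = (LINT x|lebesgue. L x)"
      have N: "0 \<le> N" unfolding N_def using Lnn by (intro Bochner_Integration.integral_nonneg) auto
      define \<omega>1 where "\<omega>1 = modulus \<eta> (1/2) f (1 / w powr \<alpha>)"
      define \<omega>2 where "\<omega>2 = modulus \<eta> (1/2) f (\<Delta> / w)"
      define Z where "Z = modular \<eta> (\<lambda>x. 1 * f x)"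
      define \<Phi> where "\<Phi> = modular \<phi> (\<lambda>x. 1 * f x)"
      have "modular \<phi> (\<lambda>x. \<mu> * (sampling_kantorovich t chi w f x - f x))
          = (\<integral>\<^sup>+x. ennreal (\<phi> \<bar>\<mu> * (sampling_kantorovich t chi w f x - f x)\<bar>) \<partial>lborel)"
        by (rule modular_lborel)
      also have "\<dots> \<le> (\<integral>\<^sup>+x. ennreal (1/3) * (ennreal (1 / m) * A1' x + ennreal (w / \<delta>) * K x + R x) \<partial>lborel)"
      proof (rule nn_integral_mono_AE)
        show "AE x in lborel. ennreal (\<phi> \<bar>\<mu> * (sampling_kantorovich t chi w f x - f x)\<bar>)
            \<le> ennreal (1/3) * (ennreal (1 / m) * A1' x + ennreal (w / \<delta>) * K x + R x)"
          using AE1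
        proof eventually_elim
          case (elim x)
          then show ?case using P[of x] by simp
        qed
      qed
      also have "\<dots> = ennreal (1/3) * (ennreal (1 / m) * (\<integral>\<^sup>+x. A1' x \<partial>lborel) + ennreal (w / \<delta>) * (\<integral>\<^sup>+x. K x \<partial>lborel)
            + ennreal (w powr (- \<theta>\<^sub>0)) * (\<integral>\<^sup>+x. ennreal (\<phi> \<bar>f x\<bar>) \<partial>lborel))"
      proof -
        have "(\<integral>\<^sup>+x. ennreal (1/3) * (ennreal (1 / m) * A1' x + ennreal (w / \<delta>) * K x + R x) \<partial>lborel)
            = ennreal (1/3) * (\<integral>\<^sup>+x. (ennreal (1 / m) * A1' x + ennreal (w / \<delta>) * K x + R x) \<partial>lborel)"
          by (rule nn_integral_cmult) (unfold R_def, measurable)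
        also have "(\<integral>\<^sup>+x. (ennreal (1 / m) * A1' x + ennreal (w / \<delta>) * K x + R x) \<partial>lborel)
            = (\<integral>\<^sup>+x. (ennreal (1 / m) * A1' x + ennreal (w / \<delta>) * K x) \<partial>lborel) + (\<integral>\<^sup>+x. R x \<partial>lborel)"
          by (rule nn_integral_add) (unfold R_def, measurable)
        also have "(\<integral>\<^sup>+x. (ennreal (1 / m) * A1' x + ennreal (w / \<delta>) * K x) \<partial>lborel)
            = (\<integral>\<^sup>+x. ennreal (1 / m) * A1' x \<partial>lborel) + (\<integral>\<^sup>+x. ennreal (w / \<delta>) * K x \<partial>lborel)"
          by (rule nn_integral_add) measurable
        also have "(\<integral>\<^sup>+x. ennreal (1 / m) * A1' x \<partial>lborel) = ennreal (1 / m) * (\<integral>\<^sup>+x. A1' x \<partial>lborel)"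
          by (rule nn_integral_cmult) measurable
        also have "(\<integral>\<^sup>+x. ennreal (w / \<delta>) * K x \<partial>lborel) = ennreal (w / \<delta>) * (\<integral>\<^sup>+x. K x \<partial>lborel)"
          by (rule nn_integral_cmult) measurable
        also have "(\<integral>\<^sup>+x. R x \<partial>lborel) = ennreal (w powr (- \<theta>\<^sub>0)) * (\<integral>\<^sup>+x. ennreal (\<phi> \<bar>f x\<bar>) \<partial>lborel)"
          unfolding R_def by (rule nn_integral_cmult) measurable
        finally show ?thesis by simp
      qed
      also have "\<dots> \<le> ennreal (1/3) * (ennreal (1 / m) * (ennreal (w / \<delta>) * (\<omega>1 * (ennreal (1 / w) * ennreal N) + Z * ennreal (M\<^sub>1 * w powr (- \<alpha>\<^sub>0) / w)))
            + ennreal (w / \<delta>) * (ennreal (\<Delta> / w) * \<omega>2) + ennreal (w powr (- \<theta>\<^sub>0)) * \<Phi>)"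
      proof (intro mult_left_mono add_mono order.refl)
        have "(\<integral>\<^sup>+x. A1' x \<partial>lborel) \<le> ennreal (w / \<delta>) * (\<integral>\<^sup>+y. ennreal (Lb (w * y)) * modular \<eta> (\<lambda>u. 1/2 * (f (u + y) - f u)) \<partial>lborel)"
          unfolding A1'_def by (rule A1_integral[OF eta samp w fb Lb])
        also have "\<dots> \<le> ennreal (w / \<delta>) * (\<omega>1 * (ennreal (1 / w) * ennreal N) + Z * ennreal (M\<^sub>1 * w powr (- \<alpha>\<^sub>0) / w))"
        proof (intro mult_left_mono)
          have tw: "w * (LINT y:{y. \<bar>y\<bar> > d}|lebesgue. L (w * y)) \<le> M\<^sub>1 * w powr (- \<alpha>\<^sub>0)"
            unfolding d_def by (rule Wt[OF wt])
          show "(\<integral>\<^sup>+y. ennreal (Lb (w * y)) * modular \<eta> (\<lambda>u. 1/2 * (f (u + y) - f u)) \<partial>lborel)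
              \<le> \<omega>1 * (ennreal (1 / w) * ennreal N) + Z * ennreal (M\<^sub>1 * w powr (- \<alpha>\<^sub>0) / w)"
            using Y_bound[OF eta eta_convex fb Lb Lbae Lnn Lint w d tw]
            unfolding \<omega>1_def Z_def N_def d_def by simp
        qed simp
        finally show "(\<integral>\<^sup>+x. A1' x \<partial>lborel) \<le> ennreal (w / \<delta>) * (\<omega>1 * (ennreal (1 / w) * ennreal N) + Z * ennreal (M\<^sub>1 * w powr (- \<alpha>\<^sub>0) / w))" .
        show "(\<integral>\<^sup>+x. K x \<partial>lborel) \<le> ennreal (\<Delta> / w) * \<omega>2"
          unfolding K_def \<omega>2_def by (rule K_integral[OF eta fb]) (use Dpos w in auto)
        show "(\<integral>\<^sup>+x. ennreal (\<phi> \<bar>f x\<bar>) \<partial>lborel) \<le> \<Phi>"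
          unfolding \<Phi>_def modular_lborel by simp
      qed simp_all
      also have "\<dots> = ennreal (N / (3 * \<delta> * m)) * \<omega>1 + ennreal (M\<^sub>1 / (3 * \<delta> * m)) * Z * ennreal (w powr (- \<alpha>\<^sub>0))
          + ennreal (\<Delta> / (3 * \<delta>)) * \<omega>2 + ennreal (1/3) * \<Phi> * ennreal (w powr (- \<theta>\<^sub>0))"
        by (rule final_alg) (use w dpos m N M1 Dpos in auto)
      finally show ?thesis unfolding N_def \<omega>1_def \<omega>2_def Z_def \<Phi>_def m_def by simp
    qed
  qed
qed

theorem theorem3p1:
  fixes t :: "int \<Rightarrow> real" and \<delta> \<Delta> :: real
    and chi :: "real \<Rightarrow> real \<Rightarrow> real" and L \<psi> \<phi> \<eta> f :: "real \<Rightarrow> real"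
    and \<theta>\<^sub>0 \<alpha> M\<^sub>1 \<alpha>\<^sub>0 :: real
  assumes samp: "sampling_sequence t \<delta> \<Delta>"
    and chi1: "kernel_chi1 t chi" and chi2: "kernel_chi2 chi"
    and chi3: "kernel_chi3 chi L \<psi>" and chi4: "kernel_chi4 t chi \<theta>\<^sub>0"
    and L1: "cond_L1 L" and L2: "cond_L2 t L"
    and phi: "phi_function \<phi>" and phi_convex: "convex_on {0..} \<phi>"
    and eta: "phi_function \<eta>" and eta_convex: "convex_on {0..} \<eta>"
    and H: "cond_H \<phi> \<eta> \<psi>"
    and f: "f \<in> orlicz (\<lambda>u. \<phi> u + \<eta> u)"
    and alpha: "0 < \<alpha>" "\<alpha> < 1"
    and M1: "M\<^sub>1 > 0" and alpha0: "\<alpha>\<^sub>0 > 0"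
    and tail: "\<exists>W. \<forall>w\<ge>W. w * (LINT y:{y. \<bar>y\<bar> > 1 / w powr \<alpha>}|lebesgue. L (w * y))
                          \<le> M\<^sub>1 * w powr (- \<alpha>\<^sub>0)"
  shows "\<exists>\<mu>>0. \<exists>lam\<^sub>0>0. \<exists>lam>0. \<exists>W. \<forall>w\<ge>W.
    modular \<phi> (\<lambda>x. \<mu> * (sampling_kantorovich t chi w f x - f x))
      \<le> ennreal ((LINT x|lebesgue. L x) / (3 * \<delta> * m0 t L)) * modulus \<eta> lam f (1 / w powr \<alpha>)
       + ennreal (M\<^sub>1 / (3 * \<delta> * m0 t L)) * modular \<eta> (\<lambda>x. lam\<^sub>0 * f x) * ennreal (w powr (- \<alpha>\<^sub>0))
       + ennreal (\<Delta> / (3 * \<delta>)) * modulus \<eta> lam f (\<Delta> / w)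
       + ennreal (1 / 3) * modular \<phi> (\<lambda>x. lam\<^sub>0 * f x) * ennreal (w powr (- \<theta>\<^sub>0))"
proof -
  have flm: "f \<in> borel_measurable lebesgue" using f unfolding orlicz_def by auto
  obtain g where gb[measurable]: "g \<in> borel_measurable borel" and ae: "AE x in lborel. f x = g x"
    using completion_ex_borel_measurable_real[OF flm] by auto
  have aeL: "AE x in lebesgue. f x = g x" using ae by (rule AE_completion)
  have mod_eq: "modular h (\<lambda>x. c * f x) = modular h (\<lambda>x. c * g x)" for h c
    unfolding modular_lborel using ae by (intro nn_integral_cong_AE) auto
  have go: "g \<in> orlicz (\<lambda>u. \<phi> u + \<eta> u)"
  proof -
    obtain lam where "lam > 0" "modular (\<lambda>u. \<phi> u + \<eta> u) (\<lambda>x. lam * f x) < \<infinity>" using f unfolding orlicz_def by auto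
    moreover have "g \<in> borel_measurable lebesgue" by (rule measurable_completion) simp
    ultimately show ?thesis unfolding orlicz_def using mod_eq by auto
  qed
  have lint_eq: "(LINT u:A|lebesgue. f u) = (LINT u:A|lebesgue. g u)" if A: "A \<in> sets borel" for A
  proof -
    have gl: "g \<in> borel_measurable lebesgue" by (rule measurable_completion) simp
    have Al: "A \<in> sets lebesgue" using A by (simp add: sets_completionI_sets)
    show ?thesis unfolding set_lebesgue_integral_def
      by (rule integral_cong_AE) (use flm gl Al aeL in auto)
  qed
  have S_eq: "sampling_kantorovich t chi w f x = sampling_kantorovich t chi w g x" for w x
    unfolding sampling_kantorovich_def by (subst lint_eq) auto
  have modS_eq: "modular \<phi> (\<lambda>x. \<mu> * (sampling_kantorovich t chi w f x - f x)) = modular \<phi> (\<lambda>x. \<mu> * (sampling_kantorovich t chi w g x - g x))" for \<mu> w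
    unfolding modular_lborel S_eq using ae by (intro nn_integral_cong_AE) auto
  have modulus_eq: "modulus \<eta> lam f d = modulus \<eta> lam g d" for lam d
    unfolding modulus_def
  proof (intro SUP_cong refl)
    fix s
    have "AE x in lborel. f (s + 1 * x) = g (s + 1 * x)" by (rule AE_affine[OF ae]) simp
    then show "modular \<eta> (\<lambda>x. lam * (f (x + s) - f x)) = modular \<eta> (\<lambda>x. lam * (g (x + s) - g x))"
      unfolding modular_lborel using ae by (intro nn_integral_cong_AE) (auto simp: add.commute)
  qed
  have "\<exists>\<mu>>0. \<exists>lam\<^sub>0>0. \<exists>lam>0. \<exists>W. \<forall>w\<ge>W.
    modular \<phi> (\<lambda>x. \<mu> * (sampling_kantorovich t chi w g x - g x))
      \<le> ennreal ((LINT x|lebesgue. L x) / (3 * \<delta> * m0 t L)) * modulus \<eta> lam g (1 / w powr \<alpha>)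
       + ennreal (M\<^sub>1 / (3 * \<delta> * m0 t L)) * modular \<eta> (\<lambda>x. lam\<^sub>0 * g x) * ennreal (w powr (- \<alpha>\<^sub>0))
       + ennreal (\<Delta> / (3 * \<delta>)) * modulus \<eta> lam g (\<Delta> / w)
       + ennreal (1 / 3) * modular \<phi> (\<lambda>x. lam\<^sub>0 * g x) * ennreal (w powr (- \<theta>\<^sub>0))"
    by (rule main_borel[OF samp chi1 chi2 chi3 chi4 L1 L2 phi phi_convex eta eta_convex H go gb alpha M1 alpha0 tail])
  then show ?thesis unfolding modS_eq modulus_eq mod_eq .
qed

end
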